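(* For every $D\in\mathcal{C}$: (i) $\mathcal{T}^{2k}(D)=D^\uparrow$ for all integers $k\ge1$; (ii) $\mathcal{T}^{2k+1}(D)=\mathcal{T}(D)$ for all integers $k\ge1$; (iii) $\|\mathcal{T}(D)\|_{\partial_2,1}=\|D\|_{\partial_2,1}$; (iv) $\|\mathcal{T}^2(D)\|_{\partial_2,p}=\|D\|_{\partial_2,p}$ for all $p\ge1$.
   Context: $\mathcal{C}$ is the class of bivariate copulas; $\partial_2$ the partial derivative in the second argument; $\Pi(u,v)=uv$; the upper product is $D\vee E(u,v):=\int_0^1\min\{\partial_2D(u,t),\partial_2E(v,t)\}\,dt$; $\mathcal{T}(C):=C\vee\Pi$ and $\mathcal{T}^k$ is the $k$-fold composition. For measurable $h:(0,1)\to[0,1]$, $h^*$ is the a.e.-unique decreasing function with $\lambda(h^*\le y)=\lambda(h\le y)$ for all $y$; $D^\uparrow(v,u):=\int_0^uh_v^*(t)\,dt$ with $h_v=\partial_2D(v,\cdot)$. $\|C\|_{\partial_2,p}:=\left(\int_0^1\int_0^1|\partial_2C(u,v)|^p\,du\,dv\right)^{1/p}$. *)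

theory Defs
  imports "HOL-Analysis.Analysis"
begin

text \<open>Bivariate copulas, represented as functions real => real => real; only the values
on the unit square matter.\<close>
definition is_copula :: "(real \<Rightarrow> real \<Rightarrow> real) \<Rightarrow> bool" where
  "is_copula C \<longleftrightarrow>
     (\<forall>u\<in>{0..1}. C u 0 = 0 \<and> C 0 u = 0 \<and> C u 1 = u \<and> C 1 u = u) \<and>
     (\<forall>u1 u2 v1 v2. 0 \<le> u1 \<and> u1 \<le> u2 \<and> u2 \<le> 1 \<and> 0 \<le> v1 \<and> v1 \<le> v2 \<and> v2 \<le> 1 \<longrightarrow>
        C u2 v2 - C u2 v1 - C u1 v2 + C u1 v1 \<ge> 0)"

text \<open>Partial derivative in the second argument (set to 0 where it does not exist;
for a copula it exists for almost every t).\<close>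
definition partial2 :: "(real \<Rightarrow> real \<Rightarrow> real) \<Rightarrow> real \<Rightarrow> real \<Rightarrow> real" where
  "partial2 C u t = (if (\<lambda>s. C u s) differentiable (at t) then deriv (\<lambda>s. C u s) t else 0)"

definition Pi_cop :: "real \<Rightarrow> real \<Rightarrow> real" where
  "Pi_cop u v = u * v"

definition upper_prod :: "(real \<Rightarrow> real \<Rightarrow> real) \<Rightarrow> (real \<Rightarrow> real \<Rightarrow> real) \<Rightarrow> real \<Rightarrow> real \<Rightarrow> real" where
  "upper_prod D E u v = (LINT t:{0..1}|lborel. min (partial2 D u t) (partial2 E v t))"

definition T_op :: "(real \<Rightarrow> real \<Rightarrow> real) \<Rightarrow> real \<Rightarrow> real \<Rightarrow> real" where
  "T_op C = upper_prod C Pi_cop"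

text \<open>Decreasing rearrangement h* of h on (0,1): the (a.e. unique) nonincreasing function
equimeasurable with h.\<close>
definition decr_rearr :: "(real \<Rightarrow> real) \<Rightarrow> real \<Rightarrow> real" where
  "decr_rearr h = (SOME g. antimono_on {0<..<1} g \<and>
      (\<forall>y. measure lborel {t\<in>{0<..<1}. g t \<le> y} = measure lborel {t\<in>{0<..<1}. h t \<le> y}))"

definition D_up :: "(real \<Rightarrow> real \<Rightarrow> real) \<Rightarrow> real \<Rightarrow> real \<Rightarrow> real" where
  "D_up D v u = (LINT t:{0..u}|lborel. decr_rearr (partial2 D v) t)"

definition norm_d2 :: "(real \<Rightarrow> real \<Rightarrow> real) \<Rightarrow> real \<Rightarrow> real" where
  "norm_d2 C p = (LINT v:{0..1}|lborel. LINT u:{0..1}|lborel. \<bar>partial2 C u v\<bar> powr p) powr (1 / p)"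

end

theory Submission
  imports Defs
begin

abbreviation I01 :: "real set" where "I01 \<equiv> {0<..<1}"

definition pd :: "(real \<Rightarrow> real) \<Rightarrow> real \<Rightarrow> real" where
  "pd f t = (if f differentiable (at t) then deriv f t else 0)"

lemma partial2_pd: "partial2 C u = pd (C u)"
  by (simp add: partial2_def pd_def fun_eq_iff)

lemma partial2_Pi: "partial2 Pi_cop v t = v"
proof -
  have d: "((\<lambda>s. v * s) has_real_derivative v) (at t)"
    by (auto intro!: derivative_eq_intros)
  then have "(\<lambda>s. v * s) differentiable (at t)" using real_differentiable_def by blast
  moreover have "Pi_cop v = (\<lambda>s. v * s)" by (simp add: fun_eq_iff Pi_cop_def)
  ultimately show ?thesis using DERIV_imp_deriv[OF d] by (simp add: partial2_def)
qed

definition Phi :: "(real \<Rightarrow> real) \<Rightarrow> real \<Rightarrow> real" where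
  "Phi h v = (LINT s:{0..1}|lborel. min (h s) v)"

lemma T_op_Phi: "T_op E u = Phi (partial2 E u)"
  by (simp add: fun_eq_iff T_op_def upper_prod_def Phi_def partial2_Pi)

lemma pd_range:
  assumes lip: "\<And>x y. 0 \<le> x \<Longrightarrow> x \<le> y \<Longrightarrow> y \<le> 1 \<Longrightarrow> 0 \<le> f y - f x \<and> f y - f x \<le> y - x"
    and v: "v \<in> I01"
  shows "0 \<le> pd f v \<and> pd f v \<le> 1"
proof (cases "f differentiable (at v)")
  case False then show ?thesis by (simp add: pd_def)
next
  case True
  then have "(f has_real_derivative deriv f v) (at v)"
    using DERIV_deriv_iff_real_differentiable by blast
  then have lim: "((\<lambda>h. (f (v + h) - f v) / h) \<longlongrightarrow> deriv f v) (at 0)"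
    by (simp add: DERIV_def)
  have lim': "((\<lambda>h. (f (v + h) - f v) / h) \<longlongrightarrow> deriv f v) (at_right 0)"
    by (rule tendsto_mono[OF at_le lim]) simp
  have ev: "\<forall>\<^sub>F h in at_right 0. h \<in> {0<..<1 - v}"
    using v by (intro eventually_at_right_real) simp
  have ev1: "\<forall>\<^sub>F h in at_right 0. 0 \<le> (f (v + h) - f v) / h"
    using ev
  proof (rule eventually_mono)
    fix h assume h: "h \<in> {0<..<1 - v}"
    then have "0 \<le> f (v + h) - f v" using lip[of v "v + h"] v by auto
    then show "0 \<le> (f (v + h) - f v) / h" using h by simp
  qed
  have ev2: "\<forall>\<^sub>F h in at_right 0. (f (v + h) - f v) / h \<le> 1"
    using ev
  proof (rule eventually_mono)
    fix h assume h: "h \<in> {0<..<1 - v}"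
    then have "f (v + h) - f v \<le> h" using lip[of v "v + h"] v by auto
    then show "(f (v + h) - f v) / h \<le> 1" using h by simp
  qed
  have "0 \<le> deriv f v" by (rule tendsto_lowerbound[OF lim' ev1]) simp
  moreover have "deriv f v \<le> 1" by (rule tendsto_upperbound[OF lim' ev2]) simp
  ultimately show ?thesis using True by (simp add: pd_def)
qed

lemma cop_lip2:
  assumes "is_copula D" "u \<in> {0..1}" "0 \<le> x" "x \<le> y" "y \<le> 1"
  shows "0 \<le> D u y - D u x \<and> D u y - D u x \<le> y - x"
proof -
  have b: "\<forall>u\<in>{0..1}. D u 0 = 0 \<and> D 0 u = 0 \<and> D u 1 = u \<and> D 1 u = u"
   and r: "\<And>u1 u2 v1 v2. 0 \<le> u1 \<and> u1 \<le> u2 \<and> u2 \<le> 1 \<and> 0 \<le> v1 \<and> v1 \<le> v2 \<and> v2 \<le> 1 \<Longrightarrow>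
        D u2 v2 - D u2 v1 - D u1 v2 + D u1 v1 \<ge> 0"
    using assms(1) unfolding is_copula_def by blast+
  have 1: "D u y - D u x - D 0 y + D 0 x \<ge> 0" using r[of 0 u x y] assms by auto
  have 2: "D 1 y - D 1 x - D u y + D u x \<ge> 0" using r[of u 1 x y] assms by auto
  have "D 0 y = 0" "D 0 x = 0" "D 1 y = y" "D 1 x = x" using b assms by auto
  then show ?thesis using 1 2 by linarith
qed

lemma cop_lip1:
  assumes "is_copula D" "v \<in> {0..1}" "0 \<le> x" "x \<le> y" "y \<le> 1"
  shows "0 \<le> D y v - D x v \<and> D y v - D x v \<le> y - x"
proof -
  have b: "\<forall>u\<in>{0..1}. D u 0 = 0 \<and> D 0 u = 0 \<and> D u 1 = u \<and> D 1 u = u"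
   and r: "\<And>u1 u2 v1 v2. 0 \<le> u1 \<and> u1 \<le> u2 \<and> u2 \<le> 1 \<and> 0 \<le> v1 \<and> v1 \<le> v2 \<and> v2 \<le> 1 \<Longrightarrow>
        D u2 v2 - D u2 v1 - D u1 v2 + D u1 v1 \<ge> 0"
    using assms(1) unfolding is_copula_def by blast+
  have 1: "D y v - D y 0 - D x v + D x 0 \<ge> 0" using r[of x y 0 v] assms by auto
  have 2: "D y 1 - D y v - D x 1 + D x v \<ge> 0" using r[of x y v 1] assms by auto
  have "D y 0 = 0" "D x 0 = 0" "D y 1 = y" "D x 1 = x" using b assms by auto
  then show ?thesis using 1 2 by linarith
qed

lemma cop_abs:
  assumes "is_copula D" "a \<in> {0..1}" "b \<in> {0..1}" "c \<in> {0..1}" "d \<in> {0..1}"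
  shows "\<bar>D a b - D c d\<bar> \<le> \<bar>a - c\<bar> + \<bar>b - d\<bar>"
proof -
  have "\<bar>D a b - D c b\<bar> \<le> \<bar>a - c\<bar>"
    using cop_lip1[OF assms(1) assms(3), of a c] cop_lip1[OF assms(1) assms(3), of c a] assms
    by (cases "a \<le> c") auto
  moreover have "\<bar>D c b - D c d\<bar> \<le> \<bar>b - d\<bar>"
    using cop_lip2[OF assms(1) assms(4), of b d] cop_lip2[OF assms(1) assms(4), of d b] assms
    by (cases "b \<le> d") auto
  ultimately show ?thesis by linarith
qed

lemma cop_cont:
  assumes "is_copula D"
  shows "continuous_on ({0..1} \<times> {0..1}) (\<lambda>z. D (fst z) (snd z))"
  unfolding continuous_on_iff
proof (intro ballI allI impI)
  fix z e assume z: "z \<in> {0..1::real} \<times> {0..1::real}" and e: "(0::real) < e"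
  show "\<exists>d>0. \<forall>z'\<in>{0..1} \<times> {0..1}. dist z' z < d \<longrightarrow> dist (D (fst z') (snd z')) (D (fst z) (snd z)) < e"
  proof (intro exI[of _ "e/2"] conjI ballI impI)
    fix z' assume z': "z' \<in> {0..1::real} \<times> {0..1::real}" and dz: "dist z' z < e / 2"
    have "dist (fst z') (fst z) < e/2" using dist_fst_le[of z' z] dz by linarith
    moreover have "dist (snd z') (snd z) < e/2" using dist_snd_le[of z' z] dz by linarith
    moreover have "\<bar>D (fst z') (snd z') - D (fst z) (snd z)\<bar> \<le> \<bar>fst z' - fst z\<bar> + \<bar>snd z' - snd z\<bar>"
      using z z' by (intro cop_abs[OF assms]) auto
    ultimately show "dist (D (fst z') (snd z')) (D (fst z) (snd z)) < e"
      by (simp add: dist_real_def)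
  qed (use e in simp)
qed

lemma borel_mod2:
  fixes f g :: "real \<Rightarrow> real"
  assumes "f \<in> borel_measurable borel" "\<And>x. x \<noteq> a \<Longrightarrow> x \<noteq> b \<Longrightarrow> g x = f x"
  shows "g \<in> borel_measurable borel"
proof -
  have "g = (\<lambda>x. if x = a then g a else if x = b then g b else f x)"
    using assms(2) by (auto simp: fun_eq_iff)
  also have "\<dots> \<in> borel_measurable borel" using assms(1) by measurable
  finally show ?thesis .
qed

lemma set_int_open:
  fixes f :: "real \<Rightarrow> real"
  assumes "set_borel_measurable lborel {a<..<b} f"
  shows "(LINT x:{a..b}|lborel. f x) = (LINT x:{a<..<b}|lborel. f x)"
proof -
  have m: "(\<lambda>x. indicator {a<..<b} x * f x) \<in> borel_measurable borel"
    using assms by (simp add: set_borel_measurable_def)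
  have m2: "(\<lambda>x. indicator {a..b} x * f x) \<in> borel_measurable borel"
    by (rule borel_mod2[OF m, of a b]) (auto simp: indicator_def)
  have ae: "AE x in lborel. x \<notin> {a, b}"
    by (rule AE_not_in) (simp add: countable_imp_null_set_lborel)
  have ae2: "AE x in lborel. indicator {a..b} x * f x = indicator {a<..<b} x * f x"
    by (rule eventually_mono[OF ae]) (auto simp: indicator_def)
  show ?thesis unfolding set_lebesgue_integral_def
    using integral_cong_AE[OF _ _ ae2] m m2 by simp
qed

definition MI :: "real measure" where "MI = restrict_space lborel I01"

definition good :: "(real \<Rightarrow> real) \<Rightarrow> bool" where
  "good h \<longleftrightarrow> h \<in> borel_measurable MI \<and> (\<forall>t\<in>I01. 0 \<le> h t \<and> h t \<le> 1)"

definition Gf :: "(real \<Rightarrow> real) \<Rightarrow> real \<Rightarrow> real" where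
  "Gf h y = measure lborel {t\<in>I01. y < h t}"

lemma space_MI[simp]: "space MI = I01"
  by (simp add: MI_def)

lemma sets_MI: "A \<in> sets MI \<longleftrightarrow> A \<subseteq> I01 \<and> A \<in> sets lborel"
  unfolding MI_def by (rule sets_restrict_space_iff) simp

lemma I01_fmeas: "I01 \<in> fmeasurable lborel"
  by (auto simp: fmeasurable_def)

lemma finite_MI: "finite_measure MI"
  unfolding MI_def
  by (rule finite_measureI) (simp add: space_restrict_space emeasure_restrict_space)

lemma sigma_finite_MI: "sigma_finite_measure MI"
  using finite_MI by (simp add: finite_measure_def)

lemma meas_MI_iff:
  fixes h :: "real \<Rightarrow> real"
  shows "h \<in> borel_measurable MI \<longleftrightarrow> set_borel_measurable lborel I01 h"
  unfolding MI_def set_borel_measurable_def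
  by (rule borel_measurable_restrict_space_iff) simp

lemma integral_MI:
  fixes f :: "real \<Rightarrow> real"
  shows "integral\<^sup>L MI f = (LINT x:I01|lborel. f x)"
  unfolding MI_def set_lebesgue_integral_def
  by (rule integral_restrict_space) simp

lemma meas_sets_I01:
  fixes h :: "real \<Rightarrow> real"
  assumes "h \<in> borel_measurable MI" "B \<in> sets borel"
  shows "{t\<in>I01. h t \<in> B} \<in> sets lborel"
proof -
  have "h -` B \<inter> space MI \<in> sets MI" by (rule measurable_sets) (use assms in auto)
  moreover have "h -` B \<inter> space MI = {t\<in>I01. h t \<in> B}" by auto
  ultimately show ?thesis by (simp add: sets_MI)
qed

lemma meas_sets_I01_less:
  fixes h :: "real \<Rightarrow> real"
  assumes "h \<in> borel_measurable MI"
  shows "{t\<in>I01. y < h t} \<in> sets lborel"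
  using meas_sets_I01[OF assms, of "{y<..}"] by simp

lemma meas_sets_I01_le:
  fixes h :: "real \<Rightarrow> real"
  assumes "h \<in> borel_measurable MI"
  shows "{t\<in>I01. h t \<le> y} \<in> sets lborel"
  using meas_sets_I01[OF assms, of "{..y}"] by simp

lemma measure_sub_I01:
  assumes "A \<subseteq> I01" "A \<in> sets lborel"
  shows "measure lborel A \<le> 1" "0 \<le> measure lborel A"
proof -
  have "measure lborel A \<le> measure lborel I01"
    by (rule measure_mono_fmeasurable) (use assms I01_fmeas in auto)
  then show "measure lborel A \<le> 1" by simp
qed simp

lemma emeasure_sub_I01:
  assumes "A \<subseteq> I01" "A \<in> sets lborel"
  shows "emeasure lborel A = ennreal (measure lborel A)"
proof -
  have "emeasure lborel A \<le> emeasure lborel I01"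
    by (rule emeasure_mono) (use assms in auto)
  then have "emeasure lborel A \<noteq> top" by (auto simp: top_unique)
  then show ?thesis by (rule emeasure_eq_ennreal_measure)
qed

lemma Gf_range:
  assumes "h \<in> borel_measurable MI"
  shows "0 \<le> Gf h y \<and> Gf h y \<le> 1"
proof -
  have "{t\<in>I01. y < h t} \<subseteq> I01" by auto
  from measure_sub_I01[OF this meas_sets_I01_less[OF assms]] show ?thesis unfolding Gf_def by simp
qed

lemma Gf_antimono:
  assumes "h \<in> borel_measurable MI" "y \<le> y'"
  shows "Gf h y' \<le> Gf h y"
proof -
  have "{t\<in>I01. y < h t} \<in> fmeasurable lborel"
    by (rule fmeasurableI2[OF I01_fmeas]) (use meas_sets_I01_less[OF assms(1)] in auto)
  then show ?thesis unfolding Gf_def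
    by (intro measure_mono_fmeasurable) (use assms meas_sets_I01_less[OF assms(1)] in auto)
qed

lemma Gf_neg:
  assumes "good h" "y < 0"
  shows "Gf h y = 1"
proof -
  have h0: "\<And>t. t \<in> I01 \<Longrightarrow> 0 \<le> h t" using assms(1) by (simp add: good_def)
  have e: "{t\<in>I01. y < h t} = I01"
  proof (intro set_eqI iffI)
    fix t assume "t \<in> I01" then show "t \<in> {t\<in>I01. y < h t}" using h0[of t] assms(2) by simp
  qed simp
  show ?thesis unfolding Gf_def e by simp
qed

lemma Gf_ge1:
  assumes "good h" "1 \<le> y"
  shows "Gf h y = 0"
proof -
  have h1: "\<And>t. t \<in> I01 \<Longrightarrow> h t \<le> 1" using assms(1) by (simp add: good_def)
  have e: "{t\<in>I01. y < h t} = {}"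
  proof (intro set_eqI iffI)
    fix t assume "t \<in> {t\<in>I01. y < h t}" then show "t \<in> {}" using h1[of t] assms(2) by simp
  qed simp
  show ?thesis unfolding Gf_def e by simp
qed

lemma Gf_meas:
  assumes "h \<in> borel_measurable MI"
  shows "Gf h \<in> borel_measurable borel"
proof -
  have "mono (\<lambda>y. - Gf h y)" using Gf_antimono[OF assms] by (auto simp: mono_def)
  then have "(\<lambda>y. - Gf h y) \<in> borel_measurable borel" by (rule borel_measurable_mono)
  then have "(\<lambda>y. - (- Gf h y)) \<in> borel_measurable borel" by (rule borel_measurable_uminus)
  then show ?thesis by simp
qed

lemma Gf_discont_countable:
  assumes "h \<in> borel_measurable MI"
  shows "countable {y. \<not> isCont (Gf h) y}"
proof -
  have "mono (\<lambda>y. - Gf h y)" using Gf_antimono[OF assms] by (auto simp: mono_def)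
  then have c: "countable {y. \<not> isCont (\<lambda>y. - Gf h y) y}" by (rule mono_ctble_discont)
  have "isCont (Gf h) y" if "isCont (\<lambda>y. - Gf h y) y" for y
    using continuous_minus[OF that] by simp
  then have "{y. \<not> isCont (Gf h) y} \<subseteq> {y. \<not> isCont (\<lambda>y. - Gf h y) y}" by blast
  then show ?thesis using c by (rule countable_subset)
qed

lemma Gf_right_cont:
  assumes "h \<in> borel_measurable MI"
  shows "(Gf h \<longlongrightarrow> Gf h y) (at_right y)"
proof (rule order_tendstoI)
  fix a assume "Gf h y < a"
  have "\<forall>\<^sub>F x in at_right y. y < x" by (rule eventually_at_right_less)
  then show "\<forall>\<^sub>F x in at_right y. Gf h x < a"
  proof (rule eventually_mono)
    fix x assume "y < x"
    then have "Gf h x \<le> Gf h y" using Gf_antimono[OF assms, of y x] by simp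
    then show "Gf h x < a" using \<open>Gf h y < a\<close> by simp
  qed
next
  fix a assume a: "a < Gf h y"
  define A where "A n = {t\<in>I01. y + 1 / real (Suc n) < h t}" for n
  have inc: "incseq A"
    unfolding A_def incseq_def
  proof (intro allI impI subsetI)
    fix m n t assume "m \<le> n" "t \<in> {t\<in>I01. y + 1 / real (Suc m) < h t}"
    moreover have "1 / real (Suc n) \<le> 1 / real (Suc m)" using \<open>m \<le> n\<close> by (simp add: frac_le)
    ultimately show "t \<in> {t\<in>I01. y + 1 / real (Suc n) < h t}" by auto
  qed
  have un: "(\<Union>n. A n) = {t\<in>I01. y < h t}"
  proof (intro equalityI subsetI)
    fix t assume "t \<in> {t\<in>I01. y < h t}"
    then have t: "t \<in> I01" "0 < h t - y" by auto
    then obtain n where "1 / real (Suc n) < h t - y"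
      using nat_approx_posE by blast
    then have "y + 1 / real (Suc n) < h t" by linarith
    then have "t \<in> A n" using t unfolding A_def by blast
    then show "t \<in> (\<Union>n. A n)" by blast
  next
    fix t assume "t \<in> (\<Union>n. A n)"
    then obtain n where "t \<in> A n" by auto
    then have t: "t \<in> I01" "y + 1 / real (Suc n) < h t" unfolding A_def by auto
    moreover have "0 < 1 / real (Suc n)" by simp
    ultimately have "y < h t" by linarith
    then show "t \<in> {t\<in>I01. y < h t}" using t by simp
  qed
  have "(\<lambda>n. measure lborel (A n)) \<longlonglongrightarrow> measure lborel (\<Union>n. A n)"
  proof (rule Lim_measure_incseq)
    show "range A \<subseteq> sets lborel" unfolding A_def using meas_sets_I01_less[OF assms] by auto
    show "emeasure lborel (\<Union> (range A)) \<noteq> \<infinity>"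
    proof -
      have "{t\<in>I01. y < h t} \<subseteq> I01" by auto
      from emeasure_sub_I01[OF this meas_sets_I01_less[OF assms]] show ?thesis unfolding un by simp
    qed
  qed (rule inc)
  then have "(\<lambda>n. Gf h (y + 1 / real (Suc n))) \<longlonglongrightarrow> Gf h y"
    unfolding un by (simp add: Gf_def A_def)
  from order_tendstoD(1)[OF this a] obtain N where "\<And>n. n \<ge> N \<Longrightarrow> a < Gf h (y + 1 / real (Suc n))"
    unfolding eventually_sequentially by blast
  then have n: "a < Gf h (y + 1 / real (Suc N))" by simp
  have "\<forall>\<^sub>F x in at_right y. x \<in> {y<..<y + 1 / real (Suc N)}"
    by (rule eventually_at_right_real) simp
  then show "\<forall>\<^sub>F x in at_right y. a < Gf h x"
  proof (rule eventually_mono)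
    fix x assume "x \<in> {y<..<y + 1 / real (Suc N)}"
    then have "Gf h (y + 1 / real (Suc N)) \<le> Gf h x" by (intro Gf_antimono[OF assms]) auto
    then show "a < Gf h x" using n by linarith
  qed
qed

lemma measure_le_compl:
  assumes "h \<in> borel_measurable MI"
  shows "measure lborel {t\<in>I01. h t \<le> y} = 1 - Gf h y"
proof -
  have e: "{t\<in>I01. h t \<le> y} = I01 - {t\<in>I01. y < h t}" by auto
  have "measure lborel (I01 - {t\<in>I01. y < h t}) = measure lborel I01 - measure lborel {t\<in>I01. y < h t}"
    by (rule measure_Diff) (use meas_sets_I01_less[OF assms] in auto)
  then show ?thesis unfolding e Gf_def by simp
qed

lemma good_meas: "good h \<Longrightarrow> h \<in> borel_measurable MI"
  by (simp add: good_def)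

lemma measure_MI_space: "measure MI I01 = 1"
  unfolding MI_def by (simp add: measure_restrict_space)

lemma integrable_MI_bound:
  fixes f :: "real \<Rightarrow> real"
  assumes "f \<in> borel_measurable MI" "\<And>t. t \<in> I01 \<Longrightarrow> \<bar>f t\<bar> \<le> B"
  shows "integrable MI f"
  by (rule finite_measure.integrable_const_bound[OF finite_MI, of _ B])
     (use assms in auto)

lemma Phi_MI:
  assumes "good h"
  shows "Phi h v = integral\<^sup>L MI (\<lambda>s. min (h s) v)"
proof -
  have m: "(\<lambda>s. min (h s) v) \<in> borel_measurable MI" using good_meas[OF assms] by measurable
  then have "set_borel_measurable lborel I01 (\<lambda>s. min (h s) v)" by (simp add: meas_MI_iff)
  then show ?thesis unfolding Phi_def integral_MI by (rule set_int_open)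
qed

lemma emeasure_distr_Ioi:
  assumes "h \<in> borel_measurable MI"
  shows "emeasure (distr MI borel h) {x<..} = ennreal (Gf h x)"
proof -
  have "emeasure (distr MI borel h) {x<..} = emeasure MI (h -` {x<..} \<inter> space MI)"
    by (rule emeasure_distr) (use assms in auto)
  also have "h -` {x<..} \<inter> space MI = {t\<in>I01. x < h t}" by auto
  also have "emeasure MI {t\<in>I01. x < h t} = emeasure lborel {t\<in>I01. x < h t}"
    unfolding MI_def by (rule emeasure_restrict_space) auto
  also have "\<dots> = ennreal (Gf h x)" unfolding Gf_def
    by (rule emeasure_sub_I01) (use meas_sets_I01_less[OF assms] in auto)
  finally show ?thesis .
qed

lemma distr_eq_Gf:
  assumes "h \<in> borel_measurable MI" "k \<in> borel_measurable MI" "Gf h = Gf k"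
  shows "distr MI borel h = distr MI borel k"
  by (rule measure_eqI_lessThan) (simp_all add: emeasure_distr_Ioi assms)

lemma integral_Gf_eq:
  fixes g :: "real \<Rightarrow> real"
  assumes "h \<in> borel_measurable MI" "k \<in> borel_measurable MI" "Gf h = Gf k"
    and g: "g \<in> borel_measurable borel"
  shows "integral\<^sup>L MI (\<lambda>s. g (h s)) = integral\<^sup>L MI (\<lambda>s. g (k s))"
proof -
  have "integral\<^sup>L MI (\<lambda>s. g (h s)) = integral\<^sup>L (distr MI borel h) g"
    by (rule integral_distr[symmetric]) (use assms in auto)
  also have "\<dots> = integral\<^sup>L (distr MI borel k) g" using distr_eq_Gf[OF assms(1-3)] by simp
  also have "\<dots> = integral\<^sup>L MI (\<lambda>s. g (k s))"
    by (rule integral_distr) (use assms in auto)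
  finally show ?thesis .
qed

lemma Phi_Gf_eq:
  assumes "good h" "good k" "Gf h = Gf k"
  shows "Phi h v = Phi k v"
proof -
  have "(\<lambda>x. min x v) \<in> borel_measurable borel" by measurable
  then show ?thesis unfolding Phi_MI[OF assms(1)] Phi_MI[OF assms(2)]
    using integral_Gf_eq[OF good_meas[OF assms(1)] good_meas[OF assms(2)] assms(3)] by blast
qed

lemma Gf_countable_mod:
  assumes "h \<in> borel_measurable MI" "k \<in> borel_measurable MI" "countable C"
    and eq: "\<And>t. t \<in> I01 \<Longrightarrow> t \<notin> C \<Longrightarrow> h t = k t"
  shows "Gf h = Gf k"
proof
  fix y
  have "AE x in lborel. x \<notin> C" by (rule AE_not_in) (simp add: countable_imp_null_set_lborel assms(3))
  then have "AE x in lborel. (x \<in> {t\<in>I01. y < h t}) = (x \<in> {t\<in>I01. y < k t})"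
    by (rule eventually_mono) (use eq in auto)
  then show "Gf h y = Gf k y" unfolding Gf_def
    by (rule measure_eq_AE) (use meas_sets_I01_less assms in auto)
qed

lemma good_Gf:
  assumes "good h"
  shows "good (Gf h)"
  unfolding good_def
proof
  have "Gf h \<in> borel_measurable borel" by (rule Gf_meas[OF good_meas[OF assms]])
  then show "Gf h \<in> borel_measurable MI" unfolding MI_def
    by (simp add: measurable_restrict_space1)
  show "\<forall>t\<in>I01. 0 \<le> Gf h t \<and> Gf h t \<le> 1" using Gf_range[OF good_meas[OF assms]] by blast
qed

lemma Phi_lip:
  assumes "good h" "x \<le> y"
  shows "0 \<le> Phi h y - Phi h x \<and> Phi h y - Phi h x \<le> y - x"
proof -
  have hm: "h \<in> borel_measurable MI" using assms by (simp add: good_def)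
  have hb: "\<And>t. t \<in> I01 \<Longrightarrow> 0 \<le> h t \<and> h t \<le> 1" using assms by (simp add: good_def)
  have int: "integrable MI (\<lambda>s. min (h s) v)" for v
    by (rule integrable_MI_bound[of _ "\<bar>v\<bar> + 1"]) (use hm hb in \<open>measurable, force\<close>)
  have "Phi h y - Phi h x = integral\<^sup>L MI (\<lambda>s. min (h s) y - min (h s) x)"
    unfolding Phi_MI[OF assms(1)] by (rule Bochner_Integration.integral_diff[symmetric, OF int int])
  moreover have "0 \<le> integral\<^sup>L MI (\<lambda>s. min (h s) y - min (h s) x)"
    by (rule integral_nonneg_AE) (use assms(2) in auto)
  moreover have "integral\<^sup>L MI (\<lambda>s. min (h s) y - min (h s) x) \<le> integral\<^sup>L MI (\<lambda>s. y - x)"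
    by (rule integral_mono) (use int assms(2) finite_MI in \<open>auto intro!: Bochner_Integration.integrable_diff finite_measure.integrable_const\<close>)
  moreover have "integral\<^sup>L MI (\<lambda>s. y - x) = y - x"
    using measure_MI_space by simp
  ultimately show ?thesis by linarith
qed

lemma emeasure_min_set:
  fixes a v :: real
  assumes "0 \<le> a" "0 \<le> v"
  shows "emeasure lborel ({0..v} \<inter> {..<a}) = ennreal (min a v)"
proof (cases "a \<le> v")
  case True
  then have e: "{0..v} \<inter> {..<a} = {0..<a}" by auto
  have m: "min a v = a" using True by (rule min_absorb1)
  have "emeasure lborel {0..<a} = ennreal (a - 0)" by (rule emeasure_lborel_Ico) (rule assms(1))
  then show ?thesis unfolding e m by simp
next
  case False
  then have e: "{0..v} \<inter> {..<a} = {0..v}" by auto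
  have m: "min a v = v" using False by simp
  have "emeasure lborel {0..v} = ennreal (v - 0)" by (rule emeasure_lborel_Icc) (rule assms(2))
  then show ?thesis unfolding e m by simp
qed

lemma emeasure_MI_Gf:
  assumes "h \<in> borel_measurable MI"
  shows "emeasure MI {t\<in>I01. r < h t} = ennreal (Gf h r)"
proof -
  have "emeasure MI {t\<in>I01. r < h t} = emeasure lborel {t\<in>I01. r < h t}"
    unfolding MI_def by (rule emeasure_restrict_space) auto
  also have "\<dots> = ennreal (Gf h r)" unfolding Gf_def
    by (rule emeasure_sub_I01) (use meas_sets_I01_less[OF assms] in auto)
  finally show ?thesis .
qed

lemma Phi_layer:
  assumes "good h" "0 \<le> v" "v \<le> 1"
  shows "Phi h v = (LINT r:{0..v}|lborel. Gf h r)"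
proof -
  have hm[measurable]: "h \<in> borel_measurable MI" using assms by (simp add: good_def)
  have hb: "\<And>t. t \<in> I01 \<Longrightarrow> 0 \<le> h t \<and> h t \<le> 1" using assms by (simp add: good_def)
  have Gm[measurable]: "Gf h \<in> borel_measurable borel" by (rule Gf_meas[OF hm])
  define F where "F s r = (if 0 \<le> r \<and> r \<le> v \<and> r < h s then 1 else 0 :: ennreal)" for s r
  have Fm: "case_prod F \<in> borel_measurable (MI \<Otimes>\<^sub>M lborel)" unfolding F_def by measurable
  have psf: "pair_sigma_finite MI lborel"
    unfolding pair_sigma_finite_def using sigma_finite_MI sigma_finite_lborel by blast
  have F1: "(\<integral>\<^sup>+ r. F s r \<partial>lborel) = ennreal (min (h s) v)" if s: "s \<in> space MI" for s
  proof -
    have "(\<integral>\<^sup>+ r. F s r \<partial>lborel) = (\<integral>\<^sup>+ r. indicator ({0..v} \<inter> {..<h s}) r \<partial>lborel)"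
      by (rule nn_integral_cong) (simp add: F_def indicator_def)
    also have "\<dots> = emeasure lborel ({0..v} \<inter> {..<h s})" by (rule nn_integral_indicator) simp
    also have "\<dots> = ennreal (min (h s) v)" by (rule emeasure_min_set) (use hb[of s] s assms(2) in simp_all)
    finally show ?thesis .
  qed
  have F2: "(\<integral>\<^sup>+ s. F s r \<partial>MI) = ennreal (indicator {0..v} r * Gf h r)" for r
  proof (cases "r \<in> {0..v}")
    case True
    have "(\<integral>\<^sup>+ s. F s r \<partial>MI) = (\<integral>\<^sup>+ s. indicator {t\<in>I01. r < h t} s \<partial>MI)"
      by (rule nn_integral_cong) (use True in \<open>auto simp: F_def indicator_def\<close>)
    also have "\<dots> = emeasure MI {t\<in>I01. r < h t}"
      by (rule nn_integral_indicator) (use meas_sets_I01_less[OF hm] in \<open>auto simp: sets_MI\<close>)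
    also have "\<dots> = ennreal (Gf h r)" by (rule emeasure_MI_Gf[OF hm])
    finally show ?thesis using True by simp
  next
    case False
    have "(\<integral>\<^sup>+ s. F s r \<partial>MI) = (\<integral>\<^sup>+ s. 0 \<partial>MI)"
      by (rule nn_integral_cong) (use False in \<open>auto simp: F_def\<close>)
    then show ?thesis using False by simp
  qed
  have key: "(\<integral>\<^sup>+ s. ennreal (min (h s) v) \<partial>MI) = (\<integral>\<^sup>+ r. ennreal (indicator {0..v} r * Gf h r) \<partial>lborel)"
  proof -
    have "(\<integral>\<^sup>+ s. ennreal (min (h s) v) \<partial>MI) = (\<integral>\<^sup>+ s. (\<integral>\<^sup>+ r. F s r \<partial>lborel) \<partial>MI)"
      by (rule nn_integral_cong) (simp add: F1)
    also have "\<dots> = (\<integral>\<^sup>+ r. (\<integral>\<^sup>+ s. F s r \<partial>MI) \<partial>lborel)"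
      using pair_sigma_finite.Fubini'[OF psf Fm] by simp
    also have "\<dots> = (\<integral>\<^sup>+ r. ennreal (indicator {0..v} r * Gf h r) \<partial>lborel)"
      by (simp add: F2)
    finally show ?thesis .
  qed
  have "Phi h v = integral\<^sup>L MI (\<lambda>s. min (h s) v)" by (rule Phi_MI[OF assms(1)])
  also have "\<dots> = enn2real (\<integral>\<^sup>+ s. ennreal (min (h s) v) \<partial>MI)"
  proof (rule integral_eq_nn_integral)
    show "(\<lambda>s. min (h s) v) \<in> borel_measurable MI" by measurable
    show "AE x in MI. 0 \<le> min (h x) v" by (rule AE_I2) (use hb assms(2) in simp)
  qed
  also have "\<dots> = enn2real (\<integral>\<^sup>+ r. ennreal (indicator {0..v} r * Gf h r) \<partial>lborel)"
    by (simp add: key)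
  also have "\<dots> = integral\<^sup>L lborel (\<lambda>r. indicator {0..v} r * Gf h r)"
  proof (rule integral_eq_nn_integral[symmetric])
    show "(\<lambda>r. indicator {0..v} r * Gf h r) \<in> borel_measurable lborel" by simp
    show "AE x in lborel. 0 \<le> indicator {0..v} x * Gf h x"
      by (rule AE_I2) (use Gf_range[OF hm] in simp)
  qed
  also have "\<dots> = (LINT r:{0..v}|lborel. Gf h r)" by (simp add: set_lebesgue_integral_def)
  finally show ?thesis .
qed

lemma Gf_set_integrable:
  assumes "h \<in> borel_measurable MI"
  shows "set_integrable lborel {0..w} (Gf h)"
  unfolding set_integrable_def
proof (rule integrableI_bounded_set_indicator[where B=1])
  show "Gf h \<in> borel_measurable lborel" using Gf_meas[OF assms] by simp
  have "emeasure lborel {0..w} \<le> emeasure lborel {0..\<bar>w\<bar>}" by (rule emeasure_mono) auto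
  also have "\<dots> = ennreal \<bar>w\<bar>" using emeasure_lborel_Icc[of 0 "\<bar>w\<bar>"] by simp
  finally have le: "emeasure lborel {0..w} \<le> ennreal \<bar>w\<bar>" .
  show "emeasure lborel {0..w} < \<infinity>" using le_less_trans[OF le ennreal_less_top]
    by (simp only: infinity_ennreal_def)
  have n: "norm (Gf h x) \<le> 1" for x using Gf_range[OF assms, of x] by simp
  show "AE x in lborel. x \<in> {0..w} \<longrightarrow> norm (Gf h x) \<le> 1"
    by (rule AE_I2) (rule impI, rule n)
  show "{0..w} \<in> sets lborel" by simp
qed

lemma Phi_deriv:
  assumes "good h" "v \<in> I01" "isCont (Gf h) v"
  shows "(Phi h has_real_derivative Gf h v) (at v)"
proof -
  have hm: "h \<in> borel_measurable MI" using assms by (simp add: good_def)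
  have eq: "Phi h w = integral {0..w} (Gf h)" if "w \<in> I01" for w
    using Phi_layer[OF assms(1), of w] that set_borel_integral_eq_integral(2)[OF Gf_set_integrable[OF hm, of w]]
    by simp
  have intg: "Gf h integrable_on {0..1}"
    by (rule set_borel_integral_eq_integral(1)[OF Gf_set_integrable[OF hm]])
  have c: "continuous (at v within {0..1} - {}) (Gf h)"
    using assms(3) by (simp add: continuous_at_imp_continuous_at_within)
  have "((\<lambda>u. integral {0..u} (Gf h)) has_vector_derivative Gf h v) (at v within {0..1} - {})"
    by (rule integral_has_vector_derivative_continuous_at[OF intg _ _ c]) (use assms(2) in auto)
  moreover have "at v within {0..1} - {} = at v"
  proof -
    have "v \<in> interior {0..1::real}" unfolding interior_atLeastAtMost_real using assms(2) by simp
    then have "at v within {0..1} = at v" by (rule at_within_interior)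
    moreover have "{0..1::real} - {} = {0..1}" by simp
    ultimately show ?thesis by simp
  qed
  ultimately have "((\<lambda>u. integral {0..u} (Gf h)) has_real_derivative Gf h v) (at v)"
    by (simp add: has_real_derivative_iff_has_vector_derivative)
  then show ?thesis
    by (rule has_field_derivative_transform_within_open[where S=I01]) (use assms(2) eq in auto)
qed

lemma pd_Phi:
  assumes "good h" "v \<in> I01" "isCont (Gf h) v"
  shows "pd (Phi h) v = Gf h v"
proof -
  have d: "(Phi h has_real_derivative Gf h v) (at v)" by (rule Phi_deriv[OF assms])
  then have "Phi h differentiable (at v)" using real_differentiable_def by blast
  then show ?thesis using DERIV_imp_deriv[OF d] by (simp add: pd_def)
qed

lemma Gf_def2: "Gf (Gf h) t = measure lborel {y\<in>I01. t < Gf h y}"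
  by (simp add: Gf_def)

lemma sub_I01_fmeas:
  assumes "A \<subseteq> I01" "A \<in> sets lborel"
  shows "A \<in> fmeasurable lborel"
  by (rule fmeasurableI2[OF I01_fmeas assms(1) assms(2)])

lemma Gf3:
  assumes "good h"
  shows "Gf (Gf (Gf h)) = Gf h"
proof
  fix y :: real
  have hm: "h \<in> borel_measurable MI" using assms by (simp add: good_def)
  have gG: "good (Gf h)" by (rule good_Gf[OF assms])
  have gR: "good (Gf (Gf h))" by (rule good_Gf[OF gG])
  have Gm: "Gf h \<in> borel_measurable MI" using gG by (simp add: good_def)
  have "y < 0 \<or> 1 \<le> y \<or> (0 \<le> y \<and> y < 1)" by linarith
  then consider "y < 0" | "1 \<le> y" | "0 \<le> y" "y < 1" by blast
  then show "Gf (Gf (Gf h)) y = Gf h y"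
  proof cases
    case 1 then show ?thesis using Gf_neg[OF gR 1] Gf_neg[OF assms 1] by simp
  next
    case 2 then show ?thesis using Gf_ge1[OF gR 2] Gf_ge1[OF assms 2] by simp
  next
    case 3
    have Sm: "{y'\<in>I01. t < Gf h y'} \<in> sets lborel" for t by (rule meas_sets_I01_less[OF Gm])
    have key: "y < Gf (Gf h) t \<longleftrightarrow> t < Gf h y" if t: "t \<in> I01" for t
    proof
      assume lt: "t < Gf h y"
      have ev: "\<forall>\<^sub>F x in at_right y. t < Gf h x \<and> x \<in> {y<..<1}"
        by (rule eventually_conj[OF order_tendstoD(1)[OF Gf_right_cont[OF hm] lt] eventually_at_right_real])
           (use 3 in simp)
      have "at_right y \<noteq> (bot :: real filter)" by simp
      from eventually_happens'[OF this ev] obtain y' where y': "t < Gf h y'" "y < y'" "y' < 1" by auto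
      have sub: "{0<..y'} \<subseteq> {y''\<in>I01. t < Gf h y''}"
      proof
        fix y'' assume "y'' \<in> {0<..y'}"
        then have a: "0 < y''" "y'' \<le> y'" by auto
        then have "Gf h y' \<le> Gf h y''" by (intro Gf_antimono[OF hm])
        then show "y'' \<in> {y''\<in>I01. t < Gf h y''}" using a y' by simp
      qed
      have "y' = measure lborel {0<..y'}" using y' 3 by (simp add: measure_lborel_Ioc)
      also have "\<dots> \<le> measure lborel {y''\<in>I01. t < Gf h y''}"
      proof -
        have fm: "{y''\<in>I01. t < Gf h y''} \<in> fmeasurable lborel"
          by (rule sub_I01_fmeas[OF _ Sm]) blast
        show ?thesis by (rule measure_mono_fmeasurable[OF sub _ fm]) simp
      qed
      finally show "y < Gf (Gf h) t" unfolding Gf_def2 using y' by linarith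
    next
      assume lt: "y < Gf (Gf h) t"
      show "t < Gf h y"
      proof (rule ccontr)
        assume "\<not> t < Gf h y"
        then have le: "Gf h y \<le> t" by simp
        have sub: "{y''\<in>I01. t < Gf h y''} \<subseteq> {0<..y}"
        proof
          fix y'' assume a: "y'' \<in> {y''\<in>I01. t < Gf h y''}"
          have "y'' \<le> y"
          proof (rule ccontr)
            assume "\<not> y'' \<le> y"
            then have "Gf h y'' \<le> Gf h y" by (intro Gf_antimono[OF hm]) simp
            then show False using a le by simp
          qed
          then show "y'' \<in> {0<..y}" using a by simp
        qed
        have fm: "{0<..y} \<in> fmeasurable lborel" by (rule sub_I01_fmeas) (use 3 in auto)
        have "measure lborel {y''\<in>I01. t < Gf h y''} \<le> measure lborel {0<..y}"
          by (rule measure_mono_fmeasurable[OF sub Sm fm])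
        also have "\<dots> = y" using 3 by (simp add: measure_lborel_Ioc)
        finally show False using lt unfolding Gf_def2 by linarith
      qed
    qed
    have r: "0 \<le> Gf h y" "Gf h y \<le> 1" using Gf_range[OF hm] by auto
    have e: "{t\<in>I01. y < Gf (Gf h) t} = {0<..<Gf h y}"
    proof (intro set_eqI iffI)
      fix t assume "t \<in> {t\<in>I01. y < Gf (Gf h) t}"
      then show "t \<in> {0<..<Gf h y}" using key by auto
    next
      fix t assume "t \<in> {0<..<Gf h y}"
      then have "t \<in> I01" using r by auto
      then show "t \<in> {t\<in>I01. y < Gf (Gf h) t}" using key \<open>t \<in> {0<..<Gf h y}\<close> by auto
    qed
    show ?thesis unfolding Gf_def[of "Gf (Gf h)"] e using r by (simp add: measure_lborel_Ioo)
  qed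
qed

lemma antimono_meas:
  fixes g :: "real \<Rightarrow> real"
  assumes "antimono_on I01 g"
  shows "g \<in> borel_measurable MI"
proof -
  have "mono_on I01 (\<lambda>t. - g t)" using assms unfolding monotone_on_def by auto
  then have "(\<lambda>t. - g t) \<in> borel_measurable (restrict_space borel I01)" by (rule borel_measurable_mono_on_fnc)
  then have "(\<lambda>t. - (- g t)) \<in> borel_measurable (restrict_space borel I01)" by (rule borel_measurable_uminus)
  then have m: "g \<in> borel_measurable (restrict_space borel I01)" by simp
  have "sets MI = sets (restrict_space borel I01)" by (simp add: MI_def sets_restrict_space)
  then show ?thesis using m measurable_cong_sets[of MI "restrict_space borel I01" borel borel] by simp
qed

lemma antimono_a:
  fixes g :: "real \<Rightarrow> real"
  assumes g: "antimono_on I01 g" and t: "t \<in> I01" and lt: "y < g t"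
  shows "t \<le> Gf g y"
proof -
  have gm: "g \<in> borel_measurable MI" by (rule antimono_meas[OF g])
  have sub: "{0<..t} \<subseteq> {t'\<in>I01. y < g t'}"
  proof
    fix t' assume a: "t' \<in> {0<..t}"
    then have "g t \<le> g t'" using g t unfolding monotone_on_def by auto
    then show "t' \<in> {t'\<in>I01. y < g t'}" using a t lt by auto
  qed
  have "t = measure lborel {0<..t}" using t by (simp add: measure_lborel_Ioc)
  also have "\<dots> \<le> Gf g y" unfolding Gf_def
  proof -
    have fm: "{t'\<in>I01. y < g t'} \<in> fmeasurable lborel"
      by (rule sub_I01_fmeas[OF _ meas_sets_I01_less[OF gm]]) blast
    show "measure lborel {0<..t} \<le> measure lborel {t'\<in>I01. y < g t'}"
      by (rule measure_mono_fmeasurable[OF sub _ fm]) simp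
  qed
  finally show ?thesis .
qed

lemma antimono_b:
  fixes g :: "real \<Rightarrow> real"
  assumes g: "antimono_on I01 g" and t: "t \<in> I01" and lt: "t < Gf g y"
  shows "y < g t"
proof (rule ccontr)
  assume "\<not> y < g t"
  then have le: "g t \<le> y" by simp
  have gm: "g \<in> borel_measurable MI" by (rule antimono_meas[OF g])
  have sub: "{t'\<in>I01. y < g t'} \<subseteq> {0<..t}"
  proof
    fix t' assume a: "t' \<in> {t'\<in>I01. y < g t'}"
    have "t' \<le> t"
    proof (rule ccontr)
      assume "\<not> t' \<le> t"
      then have "g t' \<le> g t" using g t a unfolding monotone_on_def by auto
      then show False using a le by simp
    qed
    then show "t' \<in> {0<..t}" using a by simp
  qed
  have fm: "{0<..t} \<in> fmeasurable lborel" by (rule sub_I01_fmeas) (use t in auto)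
  have "Gf g y \<le> measure lborel {0<..t}" unfolding Gf_def
    by (rule measure_mono_fmeasurable[OF sub meas_sets_I01_less[OF gm] fm])
  also have "\<dots> = t" using t by (simp add: measure_lborel_Ioc)
  finally show False using lt by simp
qed

lemma antimono_eq_count:
  fixes g1 g2 :: "real \<Rightarrow> real"
  assumes g1: "antimono_on I01 g1" and g2: "antimono_on I01 g2" and eq: "Gf g1 = Gf g2"
  shows "countable {t\<in>I01. g1 t \<noteq> g2 t}"
proof -
  have claim: "\<exists>q\<in>\<rat>. t = Gf ga q"
    if ga: "antimono_on I01 ga" and gb: "antimono_on I01 gb" and e: "Gf ga = Gf gb"
      and t: "t \<in> I01" and lt: "ga t < gb t" for ga gb :: "real \<Rightarrow> real" and t
  proof -
    obtain q where q: "q \<in> \<rat>" "ga t < q" "q < gb t" using Rats_dense_in_real[OF lt] by blast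
    have "t \<le> Gf gb q" by (rule antimono_a[OF gb t q(3)])
    moreover have "\<not> t < Gf ga q" using antimono_b[OF ga t, of q] q(2) by auto
    ultimately show ?thesis using q(1) e by force
  qed
  have "{t\<in>I01. g1 t \<noteq> g2 t} \<subseteq> (\<lambda>q. Gf g1 q) ` \<rat>"
  proof
    fix t assume a: "t \<in> {t\<in>I01. g1 t \<noteq> g2 t}"
    then consider "g1 t < g2 t" | "g2 t < g1 t" by force
    then show "t \<in> (\<lambda>q. Gf g1 q) ` \<rat>"
    proof cases
      case 1 then show ?thesis using claim[OF g1 g2 eq _ 1] a by auto
    next
      case 2 then show ?thesis using claim[OF g2 g1 eq[symmetric] _ 2] a eq by auto
    qed
  qed
  then show ?thesis by (rule countable_subset) (intro countable_image countable_rat)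
qed

lemma DR:
  assumes "good h"
  shows "antimono_on I01 (decr_rearr h) \<and> Gf (decr_rearr h) = Gf h"
proof -
  have hm: "h \<in> borel_measurable MI" using assms by (simp add: good_def)
  have gG: "good (Gf h)" by (rule good_Gf[OF assms])
  have gR: "good (Gf (Gf h))" by (rule good_Gf[OF gG])
  have Gm: "Gf h \<in> borel_measurable MI" using gG by (simp add: good_def)
  define P where "P g \<longleftrightarrow> antimono_on I01 g \<and>
      (\<forall>y. measure lborel {t\<in>I01. g t \<le> y} = measure lborel {t\<in>I01. h t \<le> y})" for g
  have "P (Gf (Gf h))"
    unfolding P_def
  proof
    show "antimono_on I01 (Gf (Gf h))"
      unfolding monotone_on_def using Gf_antimono[OF Gm] by auto
    show "\<forall>y. measure lborel {t\<in>I01. Gf (Gf h) t \<le> y} = measure lborel {t\<in>I01. h t \<le> y}"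
      using measure_le_compl[OF good_meas[OF gR]] measure_le_compl[OF hm] Gf3[OF assms] by simp
  qed
  then have "P (decr_rearr h)" unfolding decr_rearr_def P_def[symmetric] by (rule someI[where P=P])
  then have a: "antimono_on I01 (decr_rearr h)"
    and m: "\<And>y. measure lborel {t\<in>I01. decr_rearr h t \<le> y} = measure lborel {t\<in>I01. h t \<le> y}"
    unfolding P_def by auto
  have "Gf (decr_rearr h) = Gf h"
  proof
    fix y
    show "Gf (decr_rearr h) y = Gf h y"
      using measure_le_compl[OF antimono_meas[OF a], of y] measure_le_compl[OF hm, of y] m[of y] by simp
  qed
  then show ?thesis using a by simp
qed

definition Qd :: "(real \<Rightarrow> real) \<Rightarrow> real \<Rightarrow> real \<Rightarrow> real" where
  "Qd f v e = (f (v + e) - f v) / e"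

definition CauQ :: "(real \<Rightarrow> real) \<Rightarrow> real \<Rightarrow> bool" where
  "CauQ f v \<longleftrightarrow> (\<forall>n::nat. \<exists>m::nat. \<forall>a b::rat.
     (0 < \<bar>real_of_rat a\<bar> \<and> \<bar>real_of_rat a\<bar> < 1 / real (Suc m) \<and>
      0 < \<bar>real_of_rat b\<bar> \<and> \<bar>real_of_rat b\<bar> < 1 / real (Suc m) \<and>
      v + real_of_rat a \<in> I01 \<and> v + real_of_rat b \<in> I01) \<longrightarrow>
     \<bar>Qd f v (real_of_rat a) - Qd f v (real_of_rat b)\<bar> \<le> 1 / real (Suc n))"

lemma abs3:
  fixes x y z w c e :: real
  assumes "\<bar>x - y\<bar> < e" "\<bar>z - w\<bar> < e" "\<bar>y - w\<bar> \<le> c"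
  shows "\<bar>x - z\<bar> \<le> c + 2 * e"
  using assms by (auto simp: abs_le_iff abs_less_iff)

lemma deriv_limit:
  assumes "f differentiable (at v)"
  shows "(\<lambda>k. Qd f v (1 / real (Suc k))) \<longlonglongrightarrow> deriv f v"
proof -
  have "(f has_real_derivative deriv f v) (at v)"
    using assms DERIV_deriv_iff_real_differentiable by blast
  then have lim: "(Qd f v \<longlongrightarrow> deriv f v) (at 0)"
    by (simp add: DERIV_def Qd_def[abs_def])
  have "filterlim (\<lambda>k. 1 / real (Suc k)) (at 0) sequentially"
    unfolding filterlim_at using LIMSEQ_inverse_real_of_nat by (simp add: inverse_eq_divide)
  from filterlim_compose[OF lim this] show ?thesis .
qed

lemma diff_imp_CauQ:
  assumes "f differentiable (at v)"
  shows "CauQ f v"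
  unfolding CauQ_def
proof
  fix n :: nat
  have "(f has_real_derivative deriv f v) (at v)"
    using assms DERIV_deriv_iff_real_differentiable by blast
  then have lim: "(Qd f v \<longlongrightarrow> deriv f v) (at 0)"
    by (simp add: DERIV_def Qd_def[abs_def])
  have ep: "0 < 1 / (2 * real (Suc n))" by simp
  from lim[unfolded LIM_eq, rule_format, OF ep] obtain s where s: "0 < s"
    and sP: "\<And>x. x \<noteq> 0 \<and> norm (x - 0) < s \<Longrightarrow> norm (Qd f v x - deriv f v) < 1 / (2 * real (Suc n))"
    by blast
  obtain m where m: "1 / real (Suc m) < s" using nat_approx_posE[OF s] by blast
  show "\<exists>m::nat. \<forall>a b::rat.
     (0 < \<bar>real_of_rat a\<bar> \<and> \<bar>real_of_rat a\<bar> < 1 / real (Suc m) \<and>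
      0 < \<bar>real_of_rat b\<bar> \<and> \<bar>real_of_rat b\<bar> < 1 / real (Suc m) \<and>
      v + real_of_rat a \<in> I01 \<and> v + real_of_rat b \<in> I01) \<longrightarrow>
     \<bar>Qd f v (real_of_rat a) - Qd f v (real_of_rat b)\<bar> \<le> 1 / real (Suc n)"
  proof (intro exI[of _ m] allI impI)
    fix a b :: rat
    assume h: "0 < \<bar>real_of_rat a\<bar> \<and> \<bar>real_of_rat a\<bar> < 1 / real (Suc m) \<and>
      0 < \<bar>real_of_rat b\<bar> \<and> \<bar>real_of_rat b\<bar> < 1 / real (Suc m) \<and>
      v + real_of_rat a \<in> I01 \<and> v + real_of_rat b \<in> I01"
    have 1: "\<bar>Qd f v (real_of_rat a) - deriv f v\<bar> < 1 / (2 * real (Suc n))"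
      using sP[of "real_of_rat a"] h m by auto
    have 2: "\<bar>Qd f v (real_of_rat b) - deriv f v\<bar> < 1 / (2 * real (Suc n))"
      using sP[of "real_of_rat b"] h m by auto
    have "1 / (2 * real (Suc n)) + 1 / (2 * real (Suc n)) = 1 / real (Suc n)" by (simp add: field_simps)
    then have sum: "1 / (2 * real (Suc n)) + 1 / (2 * real (Suc n)) = 1 / real (Suc n)" .
    have A: "Qd f v (real_of_rat a) - Qd f v (real_of_rat b) \<le> 1 / real (Suc n)"
      using 1 2 sum by (smt (verit))
    have B: "- (Qd f v (real_of_rat a) - Qd f v (real_of_rat b)) \<le> 1 / real (Suc n)"
      using 1 2 sum by (smt (verit))
    show "\<bar>Qd f v (real_of_rat a) - Qd f v (real_of_rat b)\<bar> \<le> 1 / real (Suc n)"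
      using abs_leI[OF A B] .
  qed
qed

lemma approx_rat:
  fixes f :: "real \<Rightarrow> real"
  assumes cont: "continuous_on I01 f" and e1: "e1 \<noteq> 0" "\<bar>e1\<bar> < r" "v + e1 \<in> I01"
    and eta: "0 < \<eta>"
  shows "\<exists>a::rat. 0 < \<bar>real_of_rat a\<bar> \<and> \<bar>real_of_rat a\<bar> < r \<and> v + real_of_rat a \<in> I01 \<and>
     \<bar>Qd f v (real_of_rat a) - Qd f v e1\<bar> < \<eta>"
proof -
  have "isCont f (v + e1)" using cont e1(3) continuous_on_eq_continuous_at[of I01 f] by auto
  then have ic: "isCont (\<lambda>e. f (v + e)) e1"
    by (intro continuous_intros isCont_o2[where g=f and f="\<lambda>e. v + e"]) auto
  have "isCont (Qd f v) e1" unfolding Qd_def[abs_def]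
    by (intro continuous_intros ic e1(1))
  then have "Qd f v \<midarrow>e1\<rightarrow> Qd f v e1" by (simp add: isCont_def)
  from this[unfolded LIM_eq, rule_format, OF eta] obtain s where s: "0 < s"
    and sP: "\<And>x. x \<noteq> e1 \<and> norm (x - e1) < s \<Longrightarrow> norm (Qd f v x - Qd f v e1) < \<eta>" by blast
  define \<rho> where "\<rho> = min s (min \<bar>e1\<bar> (min (r - \<bar>e1\<bar>) (min (v + e1) (1 - (v + e1)))))"
  have \<rho>: "0 < \<rho>" unfolding \<rho>_def using s e1 by auto
  obtain q where q: "q \<in> \<rat>" "e1 < q" "q < e1 + \<rho>" using Rats_dense_in_real[of e1 "e1 + \<rho>"] \<rho> by auto
  from q(1) obtain a where a: "q = real_of_rat a" by (auto elim: Rats_cases)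
  have d: "\<bar>q - e1\<bar> < \<rho>" using q by simp
  have "0 < \<bar>q\<bar>" using d e1 unfolding \<rho>_def by auto
  moreover have "\<bar>q\<bar> < r" using d unfolding \<rho>_def by auto
  moreover have "v + q \<in> I01" using d e1 unfolding \<rho>_def by auto
  moreover have "\<bar>Qd f v q - Qd f v e1\<bar> < \<eta>" using sP[of q] d q(2) unfolding \<rho>_def by auto
  ultimately show ?thesis using a by blast
qed

lemma CauQ_real:
  fixes f :: "real \<Rightarrow> real"
  assumes cont: "continuous_on I01 f" and C: "CauQ f v"
  shows "\<exists>m::nat. \<forall>e1 e2. (0 < \<bar>e1\<bar> \<and> \<bar>e1\<bar> < 1 / real (Suc m) \<and> 0 < \<bar>e2\<bar> \<and> \<bar>e2\<bar> < 1 / real (Suc m) \<and>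
      v + e1 \<in> I01 \<and> v + e2 \<in> I01) \<longrightarrow> \<bar>Qd f v e1 - Qd f v e2\<bar> \<le> 1 / real (Suc n)"
proof -
  from C[unfolded CauQ_def, rule_format, of n] obtain m where m: "\<And>a b::rat.
     (0 < \<bar>real_of_rat a\<bar> \<and> \<bar>real_of_rat a\<bar> < 1 / real (Suc m) \<and>
      0 < \<bar>real_of_rat b\<bar> \<and> \<bar>real_of_rat b\<bar> < 1 / real (Suc m) \<and>
      v + real_of_rat a \<in> I01 \<and> v + real_of_rat b \<in> I01) \<Longrightarrow>
     \<bar>Qd f v (real_of_rat a) - Qd f v (real_of_rat b)\<bar> \<le> 1 / real (Suc n)" by blast
  show ?thesis
  proof (intro exI[of _ m] allI impI)
    fix e1 e2 :: real
    assume h: "0 < \<bar>e1\<bar> \<and> \<bar>e1\<bar> < 1 / real (Suc m) \<and> 0 < \<bar>e2\<bar> \<and> \<bar>e2\<bar> < 1 / real (Suc m) \<and>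
      v + e1 \<in> I01 \<and> v + e2 \<in> I01"
    show "\<bar>Qd f v e1 - Qd f v e2\<bar> \<le> 1 / real (Suc n)"
    proof (rule field_le_epsilon)
      fix \<epsilon> :: real assume \<epsilon>: "0 < \<epsilon>"
      have \<epsilon>2: "0 < \<epsilon> / 2" using \<epsilon> by simp
      obtain a where a: "0 < \<bar>real_of_rat a\<bar>" "\<bar>real_of_rat a\<bar> < 1 / real (Suc m)"
        "v + real_of_rat a \<in> I01" "\<bar>Qd f v (real_of_rat a) - Qd f v e1\<bar> < \<epsilon> / 2"
        using approx_rat[OF cont _ _ _ \<epsilon>2, of e1 "1 / real (Suc m)" v] h by auto
      obtain b where b: "0 < \<bar>real_of_rat b\<bar>" "\<bar>real_of_rat b\<bar> < 1 / real (Suc m)"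
        "v + real_of_rat b \<in> I01" "\<bar>Qd f v (real_of_rat b) - Qd f v e2\<bar> < \<epsilon> / 2"
        using approx_rat[OF cont _ _ _ \<epsilon>2, of e2 "1 / real (Suc m)" v] h by auto
      have "\<bar>Qd f v (real_of_rat a) - Qd f v (real_of_rat b)\<bar> \<le> 1 / real (Suc n)"
        using m[of a b] a b by blast
      then have c: "\<bar>Qd f v (real_of_rat a) - Qd f v (real_of_rat b)\<bar> \<le> 1 / real (Suc n)" .
      have a4: "\<bar>Qd f v e1 - Qd f v (real_of_rat a)\<bar> < \<epsilon> / 2" using a(4) by (simp add: abs_minus_commute)
      have b4: "\<bar>Qd f v e2 - Qd f v (real_of_rat b)\<bar> < \<epsilon> / 2" using b(4) by (simp add: abs_minus_commute)
      from abs3[OF a4 b4 c] show "\<bar>Qd f v e1 - Qd f v e2\<bar> \<le> 1 / real (Suc n) + \<epsilon>" by simp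
    qed
  qed
qed

lemma CauQ_imp_diff:
  fixes f :: "real \<Rightarrow> real"
  assumes cont: "continuous_on I01 f" and C: "CauQ f v" and v: "v \<in> I01"
  shows "f differentiable (at v)"
proof -
  have R: "\<exists>m::nat. \<forall>e1 e2. (0 < \<bar>e1\<bar> \<and> \<bar>e1\<bar> < 1 / real (Suc m) \<and> 0 < \<bar>e2\<bar> \<and> \<bar>e2\<bar> < 1 / real (Suc m) \<and>
      v + e1 \<in> I01 \<and> v + e2 \<in> I01) \<longrightarrow> \<bar>Qd f v e1 - Qd f v e2\<bar> \<le> 1 / real (Suc n)" for n
    by (rule CauQ_real[OF cont C])
  obtain K0 where K0: "1 / real (Suc K0) < 1 - v" using nat_approx_posE[of "1 - v"] v by auto
  define s where "s k = Qd f v (1 / real (Suc k))" for k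
  have small: "0 < 1 / real (Suc k) \<and> v + 1 / real (Suc k) \<in> I01" if "K0 \<le> k" for k
  proof -
    have le: "1 / real (Suc k) \<le> 1 / real (Suc K0)" using that by (simp add: frac_le)
    have a1: "0 < 1 / real (Suc k)" by simp
    have a2: "1 / real (Suc k) < 1 - v" using le K0 by linarith
    have v0: "0 < v" using v by simp
    have "0 < v + 1 / real (Suc k)" using a1 v0 by linarith
    moreover have "v + 1 / real (Suc k) < 1" using a2 by linarith
    ultimately show ?thesis using a1 by simp
  qed
  have "Cauchy s"
  proof (rule metric_CauchyI)
    fix \<epsilon> :: real assume \<epsilon>: "0 < \<epsilon>"
    obtain n where n: "1 / real (Suc n) < \<epsilon>" using nat_approx_posE[OF \<epsilon>] by blast
    obtain m where m: "\<And>e1 e2. (0 < \<bar>e1\<bar> \<and> \<bar>e1\<bar> < 1 / real (Suc m) \<and> 0 < \<bar>e2\<bar> \<and> \<bar>e2\<bar> < 1 / real (Suc m) \<and>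
      v + e1 \<in> I01 \<and> v + e2 \<in> I01) \<Longrightarrow> \<bar>Qd f v e1 - Qd f v e2\<bar> \<le> 1 / real (Suc n)"
      using R[of n] by blast
    show "\<exists>M. \<forall>k\<ge>M. \<forall>l\<ge>M. dist (s k) (s l) < \<epsilon>"
    proof (intro exI[of _ "max K0 (Suc m)"] allI impI)
      fix k l assume k: "max K0 (Suc m) \<le> k" and l: "max K0 (Suc m) \<le> l"
      have "1 / real (Suc k) < 1 / real (Suc m)" using k by (simp add: frac_less2)
      moreover have "1 / real (Suc l) < 1 / real (Suc m)" using l by (simp add: frac_less2)
      ultimately have "\<bar>s k - s l\<bar> \<le> 1 / real (Suc n)"
        unfolding s_def using m small[of k] small[of l] k l by auto
      then show "dist (s k) (s l) < \<epsilon>" using n by (simp add: dist_real_def)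
    qed
  qed
  then obtain L where L: "s \<longlonglongrightarrow> L" using Cauchy_convergent_iff convergent_def by blast
  have "(Qd f v \<longlongrightarrow> L) (at 0)"
    unfolding LIM_eq
  proof (intro allI impI)
    fix \<epsilon> :: real assume \<epsilon>: "0 < \<epsilon>"
    obtain n where n: "1 / real (Suc n) < \<epsilon>" using nat_approx_posE[OF \<epsilon>] by blast
    obtain m where m: "\<And>e1 e2. (0 < \<bar>e1\<bar> \<and> \<bar>e1\<bar> < 1 / real (Suc m) \<and> 0 < \<bar>e2\<bar> \<and> \<bar>e2\<bar> < 1 / real (Suc m) \<and>
      v + e1 \<in> I01 \<and> v + e2 \<in> I01) \<Longrightarrow> \<bar>Qd f v e1 - Qd f v e2\<bar> \<le> 1 / real (Suc n)"
      using R[of n] by blast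
    define \<delta> where "\<delta> = min (1 / real (Suc m)) (min v (1 - v))"
    have \<delta>: "0 < \<delta>" unfolding \<delta>_def using v by auto
    show "\<exists>s>0. \<forall>x. x \<noteq> 0 \<and> norm (x - 0) < s \<longrightarrow> norm (Qd f v x - L) < \<epsilon>"
    proof (intro exI[of _ \<delta>] conjI allI impI \<delta>)
      fix x :: real assume x: "x \<noteq> 0 \<and> norm (x - 0) < \<delta>"
      have xc: "0 < \<bar>x\<bar>" "\<bar>x\<bar> < 1 / real (Suc m)" "v + x \<in> I01"
        using x unfolding \<delta>_def by auto
      have ev: "\<forall>\<^sub>F k in sequentially. \<bar>Qd f v x - s k\<bar> \<le> 1 / real (Suc n)"
        unfolding eventually_sequentially
      proof (intro exI[of _ "max K0 (Suc m)"] allI impI)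
        fix k assume k: "max K0 (Suc m) \<le> k"
        have "1 / real (Suc k) < 1 / real (Suc m)" using k by (simp add: frac_less2)
        then show "\<bar>Qd f v x - s k\<bar> \<le> 1 / real (Suc n)"
          unfolding s_def using m[of x "1 / real (Suc k)"] xc small[of k] k by auto
      qed
      have "(\<lambda>k. \<bar>Qd f v x - s k\<bar>) \<longlonglongrightarrow> \<bar>Qd f v x - L\<bar>"
        by (intro tendsto_intros L)
      then have "\<bar>Qd f v x - L\<bar> \<le> 1 / real (Suc n)"
        by (rule tendsto_upperbound[OF _ ev]) simp
      then show "norm (Qd f v x - L) < \<epsilon>" using n by simp
    qed
  qed
  then have "(f has_real_derivative L) (at v)"
    by (simp add: DERIV_def Qd_def[abs_def])
  then show ?thesis using real_differentiable_def by blast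
qed

lemma CauQ_iff_diff:
  fixes f :: "real \<Rightarrow> real"
  assumes cont: "continuous_on I01 f" and v: "v \<in> I01"
  shows "CauQ f v \<longleftrightarrow> f differentiable (at v)"
  using CauQ_imp_diff[OF cont _ v] diff_imp_CauQ by blast

lemma ev_small:
  assumes v: "v \<in> I01"
  shows "\<forall>\<^sub>F k in sequentially. v + 1 / real (Suc k) \<in> I01"
proof -
  have "\<forall>\<^sub>F k in sequentially. inverse (real (Suc k)) < 1 - v"
    by (rule order_tendstoD(2)[OF LIMSEQ_inverse_real_of_nat]) (use v in simp)
  then show ?thesis
  proof (rule eventually_mono)
    fix k assume k: "inverse (real (Suc k)) < 1 - v"
    have p: "0 < 1 / real (Suc k)" by simp
    have v0: "0 < v" using v by simp
    have "0 < v + 1 / real (Suc k)" using p v0 by linarith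
    moreover have "v + 1 / real (Suc k) < 1" using k by (simp add: inverse_eq_divide)
    ultimately show "v + 1 / real (Suc k) \<in> I01" by simp
  qed
qed

lemma shift_meas: "(\<lambda>z::real\<times>real. (fst z, snd z + c)) \<in> borel_measurable borel"
  by (rule borel_measurable_continuous_onI) (intro continuous_intros)

lemma M2:
  fixes F :: "real \<Rightarrow> real \<Rightarrow> real" and S :: "real set"
  assumes S: "S \<in> sets borel"
    and cont: "\<And>u. u \<in> S \<Longrightarrow> continuous_on I01 (F u)"
    and meas: "(\<lambda>z. indicator (S \<times> I01) z * F (fst z) (snd z)) \<in> borel_measurable borel"
  shows "(\<lambda>z. indicator (S \<times> I01) z * pd (F (fst z)) (snd z)) \<in> borel_measurable borel"
proof -
  define Fm where "Fm z = indicator (S \<times> I01) z * F (fst z) (snd z)" for z :: "real \<times> real"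
  have Fm_m[measurable]: "Fm \<in> borel_measurable borel" using meas unfolding Fm_def[abs_def] .
  have Fs[measurable]: "(\<lambda>z. Fm (fst z, snd z + c)) \<in> borel_measurable borel" for c
    using measurable_compose[OF shift_meas Fm_m] by (simp add: o_def)
  define Qm where "Qm e z = (Fm (fst z, snd z + e) - Fm z) / e" for e z
  have Qm_m[measurable]: "(\<lambda>z. Qm e z) \<in> borel_measurable borel" for e
    unfolding Qm_def by measurable
  define Cau where "Cau z \<longleftrightarrow> (\<forall>n::nat. \<exists>m::nat. \<forall>a b::rat.
     (0 < \<bar>real_of_rat a\<bar> \<and> \<bar>real_of_rat a\<bar> < 1 / real (Suc m) \<and>
      0 < \<bar>real_of_rat b\<bar> \<and> \<bar>real_of_rat b\<bar> < 1 / real (Suc m) \<and>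
      snd z + real_of_rat a \<in> I01 \<and> snd z + real_of_rat b \<in> I01) \<longrightarrow>
     \<bar>Qm (real_of_rat a) z - Qm (real_of_rat b) z\<bar> \<le> 1 / real (Suc n))" for z
  have p1: "Measurable.pred borel (\<lambda>z::real\<times>real. snd z + c \<in> I01)" for c
  proof -
    have f: "(\<lambda>z::real\<times>real. snd z + c) \<in> borel_measurable borel"
      by (rule borel_measurable_continuous_onI) (intro continuous_intros)
    have "(\<lambda>z::real\<times>real. snd z + c) -` I01 \<inter> space borel \<in> sets borel"
      by (rule measurable_sets[OF f]) simp
    then show ?thesis by (simp add: pred_def vimage_def)
  qed
  have p2: "Measurable.pred borel (\<lambda>z. \<bar>Qm a z - Qm b z\<bar> \<le> r)" for a b r
    by measurable
  have Cau_m[measurable]: "Measurable.pred borel Cau"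
    unfolding Cau_def
    apply (rule pred_intros_countable(1))
    apply (rule pred_intros_countable(2))
    apply (rule pred_intros_countable(1))
    apply (rule pred_intros_countable(1))
    apply (rule pred_intros_logic(4))
     apply (rule pred_intros_conj1')+
     apply (rule pred_intros_logic(3)[OF p1 p1])
    apply (rule p2)
    done
  have QmEq: "Qm e z = Qd (F (fst z)) (snd z) e" if "z \<in> S \<times> I01" "snd z + e \<in> I01" for e z
    using that by (cases z) (simp add: Qm_def Fm_def Qd_def)
  have CauEq: "Cau z \<longleftrightarrow> CauQ (F (fst z)) (snd z)" if z: "z \<in> S \<times> I01" for z
    unfolding Cau_def CauQ_def using QmEq[OF z] by (simp cong: imp_cong)
  define fk where "fk k z = indicator (S \<times> I01) z * (if Cau z then Qm (1 / real (Suc k)) z else 0)" for k z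
  have ST: "S \<times> I01 \<in> sets borel" using S by (simp add: borel_Times)
  have im: "(indicator (S \<times> I01) :: real\<times>real \<Rightarrow> real) \<in> borel_measurable borel"
    by (rule borel_measurable_indicator[OF ST])
  have CS: "{x \<in> space borel. Cau x} \<in> sets borel" using Cau_m by (rule predE)
  have fk_m: "fk k \<in> borel_measurable borel" for k unfolding fk_def
    by (intro borel_measurable_times im measurable_If[OF Qm_m _ CS] borel_measurable_const)
  show ?thesis
  proof (rule borel_measurable_LIMSEQ_metric[OF fk_m])
    fix z :: "real \<times> real"
    show "(\<lambda>k. fk k z) \<longlonglongrightarrow> indicator (S \<times> I01) z * pd (F (fst z)) (snd z)"
    proof (cases "z \<in> S \<times> I01")
      case False then show ?thesis by (simp add: fk_def)
    next
      case True
      then have u: "fst z \<in> S" and v: "snd z \<in> I01" by (auto simp: mem_Times_iff)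
      have ci: "continuous_on I01 (F (fst z))" by (rule cont[OF u])
      show ?thesis
      proof (cases "Cau z")
        case True
        then have d: "F (fst z) differentiable (at (snd z))"
          using CauEq[OF \<open>z \<in> S \<times> I01\<close>] CauQ_iff_diff[OF ci v] by simp
        have lim: "(\<lambda>k. Qd (F (fst z)) (snd z) (1 / real (Suc k))) \<longlonglongrightarrow> deriv (F (fst z)) (snd z)"
          by (rule deriv_limit[OF d])
        have ev: "\<forall>\<^sub>F k in sequentially. Qd (F (fst z)) (snd z) (1 / real (Suc k)) = fk k z"
          using ev_small[OF v]
        proof (rule eventually_mono)
          fix k assume "snd z + 1 / real (Suc k) \<in> I01"
          then show "Qd (F (fst z)) (snd z) (1 / real (Suc k)) = fk k z"
            using QmEq[OF \<open>z \<in> S \<times> I01\<close>] True \<open>z \<in> S \<times> I01\<close> by (simp add: fk_def)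
        qed
        have "(\<lambda>k. fk k z) \<longlonglongrightarrow> deriv (F (fst z)) (snd z)"
          using tendsto_cong[OF ev] lim by simp
        then show ?thesis using d \<open>z \<in> S \<times> I01\<close> by (simp add: pd_def)
      next
        case False
        then have d: "\<not> F (fst z) differentiable (at (snd z))"
          using CauEq[OF \<open>z \<in> S \<times> I01\<close>] CauQ_iff_diff[OF ci v] by simp
        show ?thesis using d False by (simp add: fk_def pd_def)
      qed
    qed
  qed
qed

abbreviation U01 :: "real set" where "U01 \<equiv> {0..1}"

definition nice :: "(real \<Rightarrow> real \<Rightarrow> real) \<Rightarrow> bool" where
  "nice E \<longleftrightarrow> (\<lambda>z. indicator (U01 \<times> I01) z * pd (E (fst z)) (snd z)) \<in> borel_measurable borel \<and>
     (\<forall>u\<in>U01. \<forall>t\<in>I01. 0 \<le> pd (E u) t \<and> pd (E u) t \<le> 1)"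

lemma T_Phi: "T_op E u = Phi (pd (E u))"
  by (simp add: T_op_Phi partial2_pd)

lemma lip_cont:
  fixes f :: "real \<Rightarrow> real"
  assumes "\<And>x y. x \<in> I01 \<Longrightarrow> y \<in> I01 \<Longrightarrow> \<bar>f x - f y\<bar> \<le> \<bar>x - y\<bar>"
  shows "continuous_on I01 f"
  unfolding continuous_on_iff
proof (intro ballI allI impI)
  fix x e assume x: "x \<in> I01" and e: "(0::real) < e"
  show "\<exists>d>0. \<forall>x'\<in>I01. dist x' x < d \<longrightarrow> dist (f x') (f x) < e"
  proof (intro exI[of _ e] conjI ballI impI e)
    fix x' assume "x' \<in> I01" "dist x' x < e"
    then show "dist (f x') (f x) < e" using assms[of x' x] x by (simp add: dist_real_def)
  qed
qed

lemma nice_good: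
  assumes "nice E" "u \<in> U01"
  shows "good (pd (E u))"
  unfolding good_def
proof
  have m: "(\<lambda>z. indicator (U01 \<times> I01) z * pd (E (fst z)) (snd z)) \<in> borel_measurable borel"
    using assms(1) by (simp add: nice_def)
  have c: "(\<lambda>t::real. (u, t)) \<in> borel_measurable borel"
    by (rule borel_measurable_continuous_onI) (intro continuous_intros)
  have "(\<lambda>t. indicator (U01 \<times> I01) (u, t) * pd (E (fst (u, t))) (snd (u, t))) \<in> borel_measurable borel"
    using measurable_compose[OF c m] by (simp add: o_def)
  moreover have "(\<lambda>t. indicator (U01 \<times> I01) (u, t) * pd (E (fst (u, t))) (snd (u, t))) =
      (\<lambda>t. indicator I01 t *\<^sub>R pd (E u) t)"
    using assms(2) by (auto simp: fun_eq_iff indicator_def)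
  ultimately have "set_borel_measurable lborel I01 (pd (E u))"
    unfolding set_borel_measurable_def by simp
  then show "pd (E u) \<in> borel_measurable MI" by (simp add: meas_MI_iff)
  show "\<forall>t\<in>I01. 0 \<le> pd (E u) t \<and> pd (E u) t \<le> 1" using assms by (simp add: nice_def)
qed

lemma cop_nice:
  assumes "is_copula D"
  shows "nice D"
  unfolding nice_def
proof
  have cont: "continuous_on I01 (D u)" if "u \<in> U01" for u
  proof (rule lip_cont)
    fix x y :: real assume "x \<in> I01" "y \<in> I01"
    then show "\<bar>D u x - D u y\<bar> \<le> \<bar>x - y\<bar>" using cop_abs[OF assms, of u x u y] that by simp
  qed
  have cs: "continuous_on (U01 \<times> I01) (\<lambda>z. D (fst z) (snd z))"
    by (rule continuous_on_subset[OF cop_cont[OF assms]]) auto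
  have meas: "(\<lambda>z. indicator (U01 \<times> I01) z * D (fst z) (snd z)) \<in> borel_measurable borel"
    using borel_measurable_continuous_on_indicator[OF _ cs] by (simp add: borel_Times)
  show "(\<lambda>z. indicator (U01 \<times> I01) z * pd (D (fst z)) (snd z)) \<in> borel_measurable borel"
    by (rule M2[OF _ cont meas]) auto
  show "\<forall>u\<in>U01. \<forall>t\<in>I01. 0 \<le> pd (D u) t \<and> pd (D u) t \<le> 1"
  proof (intro ballI)
    fix u t assume u: "u \<in> U01" and t: "t \<in> I01"
    show "0 \<le> pd (D u) t \<and> pd (D u) t \<le> 1"
      by (rule pd_range[OF _ t]) (rule cop_lip2[OF assms u], auto)
  qed
qed

lemma Phi_abs:
  assumes "good h"
  shows "\<bar>Phi h x - Phi h y\<bar> \<le> \<bar>x - y\<bar>"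
  using Phi_lip[OF assms, of x y] Phi_lip[OF assms, of y x] by (cases "x \<le> y") auto

lemma T_nice:
  assumes "nice E"
  shows "nice (T_op E)"
  unfolding nice_def
proof
  have gh: "good (pd (E u))" if "u \<in> U01" for u by (rule nice_good[OF assms that])
  have cont: "continuous_on I01 (T_op E u)" if "u \<in> U01" for u
    unfolding T_Phi by (rule lip_cont) (rule Phi_abs[OF gh[OF that]])
  define Pm where "Pm z = indicator (U01 \<times> I01) z * pd (E (fst z)) (snd z)" for z :: "real \<times> real"
  have Pm_m: "Pm \<in> borel_measurable borel" using assms unfolding nice_def Pm_def[abs_def] by simp
  define f where "f p = indicator I01 (snd p) * min (Pm (fst (fst p), snd p)) (snd (fst p))"
    for p :: "(real \<times> real) \<times> real"
  have sb: "sets ((borel :: (real \<times> real) measure) \<Otimes>\<^sub>M lborel) = sets (borel :: ((real \<times> real) \<times> real) measure)"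
  proof -
    have "sets ((borel :: (real \<times> real) measure) \<Otimes>\<^sub>M lborel) = sets ((borel :: (real \<times> real) measure) \<Otimes>\<^sub>M (borel :: real measure))"
      by (rule sets_pair_measure_cong) simp_all
    also have "\<dots> = sets (borel :: ((real \<times> real) \<times> real) measure)" by (simp only: borel_prod)
    finally show ?thesis .
  qed
  have c1: "(\<lambda>p::(real \<times> real) \<times> real. (fst (fst p), snd p)) \<in> borel_measurable borel"
    by (rule borel_measurable_continuous_onI) (intro continuous_intros)
  have c2: "(\<lambda>p::(real \<times> real) \<times> real. snd (fst p)) \<in> borel_measurable borel"
    by (rule borel_measurable_continuous_onI) (intro continuous_intros)
  have c3: "(\<lambda>p::(real \<times> real) \<times> real. snd p) \<in> borel_measurable borel"
    by (rule borel_measurable_continuous_onI) (intro continuous_intros)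
  have i3: "(\<lambda>p::(real \<times> real) \<times> real. indicator I01 (snd p) :: real) \<in> borel_measurable borel"
    using measurable_compose[OF c3 borel_measurable_indicator[of I01]] by (simp add: o_def)
  have g1: "(\<lambda>p::(real \<times> real) \<times> real. Pm (fst (fst p), snd p)) \<in> borel_measurable borel"
    using measurable_compose[OF c1 Pm_m] by (simp add: o_def)
  have fb: "f \<in> borel_measurable borel" unfolding f_def
    by (intro borel_measurable_times i3 borel_measurable_min g1 c2)
  have fm: "(\<lambda>(z, s). f (z, s)) \<in> borel_measurable ((borel :: (real \<times> real) measure) \<Otimes>\<^sub>M lborel)"
  proof -
    have e: "measurable ((borel :: (real \<times> real) measure) \<Otimes>\<^sub>M lborel) (borel :: real measure) =
        measurable (borel :: ((real \<times> real) \<times> real) measure) (borel :: real measure)"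
      by (rule measurable_cong_sets[OF sb refl])
    have "f \<in> borel_measurable ((borel :: (real \<times> real) measure) \<Otimes>\<^sub>M lborel)"
      unfolding e by (rule fb)
    then show ?thesis by (simp add: case_prod_beta')
  qed
  define \<Psi> where "\<Psi> z = (\<integral>s. f (z, s) \<partial>lborel)" for z
  have \<Psi>m: "\<Psi> \<in> borel_measurable borel" unfolding \<Psi>_def
    by (rule sigma_finite_measure.borel_measurable_lebesgue_integral[OF sigma_finite_lborel fm])
  have eq: "indicator (U01 \<times> I01) z * T_op E (fst z) (snd z) = indicator (U01 \<times> I01) z * \<Psi> z" for z
  proof (cases "z \<in> U01 \<times> I01")
    case False then show ?thesis by simp
  next
    case True
    obtain u v where z: "z = (u, v)" by (cases z)
    have u: "u \<in> U01" using True z by auto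
    have "T_op E u v = integral\<^sup>L MI (\<lambda>s. min (pd (E u) s) v)"
      unfolding T_Phi by (rule Phi_MI[OF gh[OF u]])
    also have "\<dots> = (\<integral>s. indicator I01 s * min (pd (E u) s) v \<partial>lborel)"
      by (simp add: integral_MI set_lebesgue_integral_def)
    also have "\<dots> = \<Psi> z" unfolding \<Psi>_def f_def z
      by (rule Bochner_Integration.integral_cong) (use u in \<open>auto simp: Pm_def indicator_def\<close>)
    finally show ?thesis using z by simp
  qed
  have meas: "(\<lambda>z. indicator (U01 \<times> I01) z * T_op E (fst z) (snd z)) \<in> borel_measurable borel"
    unfolding eq by (intro borel_measurable_times \<Psi>m borel_measurable_indicator) (simp add: borel_Times)
  show "(\<lambda>z. indicator (U01 \<times> I01) z * pd (T_op E (fst z)) (snd z)) \<in> borel_measurable borel"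
    by (rule M2[OF _ cont meas]) auto
  show "\<forall>u\<in>U01. \<forall>t\<in>I01. 0 \<le> pd (T_op E u) t \<and> pd (T_op E u) t \<le> 1"
  proof (intro ballI)
    fix u t assume u: "u \<in> U01" and t: "t \<in> I01"
    show "0 \<le> pd (T_op E u) t \<and> pd (T_op E u) t \<le> 1"
      unfolding T_Phi by (rule pd_range[OF _ t]) (rule Phi_lip[OF gh[OF u]])
  qed
qed

lemma T_Gf:
  assumes "nice E" "u \<in> U01"
  shows "Gf (pd (T_op E u)) = Gf (Gf (pd (E u)))"
proof -
  have g: "good (pd (E u))" by (rule nice_good[OF assms])
  have g2: "good (pd (T_op E u))" by (rule nice_good[OF T_nice[OF assms(1)] assms(2)])
  have gG: "good (Gf (pd (E u)))" by (rule good_Gf[OF g])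
  show ?thesis
  proof (rule Gf_countable_mod[OF good_meas[OF g2] good_meas[OF gG]])
    show "countable {y. \<not> isCont (Gf (pd (E u))) y}" by (rule Gf_discont_countable[OF good_meas[OF g]])
    fix t assume "t \<in> I01" "t \<notin> {y. \<not> isCont (Gf (pd (E u))) y}"
    then show "pd (T_op E u) t = Gf (pd (E u)) t" unfolding T_Phi using pd_Phi[OF g] by simp
  qed
qed

lemma T_eq:
  assumes "nice E" "nice E'" "u \<in> U01" "Gf (pd (E u)) = Gf (pd (E' u))"
  shows "T_op E u = T_op E' u"
  unfolding T_Phi
  using Phi_Gf_eq[OF nice_good[OF assms(1,3)] nice_good[OF assms(2,3)] assms(4)] by (simp add: fun_eq_iff)

lemma TT_Gf:
  assumes "nice E" "u \<in> U01"
  shows "Gf (pd (T_op (T_op E) u)) = Gf (pd (E u))"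
  using T_Gf[OF T_nice[OF assms(1)] assms(2)] T_Gf[OF assms] Gf3[OF nice_good[OF assms]] by simp

lemma sets_pair_borel2:
  "sets ((borel :: real measure) \<Otimes>\<^sub>M lborel) = sets (borel :: (real \<times> real) measure)"
proof -
  have "sets ((borel :: real measure) \<Otimes>\<^sub>M lborel) = sets ((borel :: real measure) \<Otimes>\<^sub>M (borel :: real measure))"
    by (rule sets_pair_measure_cong) simp_all
  also have "\<dots> = sets (borel :: (real \<times> real) measure)" by (simp only: borel_prod)
  finally show ?thesis .
qed

lemma norm_formula:
  assumes nc: "nice C" and p: "0 < p"
  shows "norm_d2 C p = (\<integral>u. indicator U01 u * integral\<^sup>L MI (\<lambda>t. \<bar>pd (C u) t\<bar> powr p) \<partial>lborel) powr (1 / p)"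
proof -
  define Pm where "Pm z = indicator (U01 \<times> I01) z * pd (C (fst z)) (snd z)" for z :: "real \<times> real"
  have Pm_m: "Pm \<in> borel_measurable borel" using nc unfolding nice_def Pm_def[abs_def] by simp
  define P where "P z = \<bar>Pm z\<bar> powr p" for z
  have P_m: "P \<in> borel_measurable borel" unfolding P_def[abs_def] using Pm_m by measurable
  have Peq: "P z = indicator (U01 \<times> I01) z * \<bar>pd (C (fst z)) (snd z)\<bar> powr p" for z
    using p by (cases "z \<in> U01 \<times> I01") (simp_all add: P_def Pm_def)
  have Pb: "0 \<le> P z \<and> P z \<le> 1" for z
  proof (cases "z \<in> U01 \<times> I01")
    case True
    then have "0 \<le> pd (C (fst z)) (snd z) \<and> pd (C (fst z)) (snd z) \<le> 1"
      using nc by (auto simp: nice_def mem_Times_iff)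
    then have "\<bar>pd (C (fst z)) (snd z)\<bar> powr p \<le> 1 powr p"
      by (intro powr_mono2) (use p in auto)
    then show ?thesis using True by (simp add: Peq)
  next
    case False then show ?thesis by (simp add: Peq)
  qed
  define X where "X v = (LINT u:{0..1}|lborel. \<bar>partial2 C u v\<bar> powr p)" for v
  define Y where "Y v = (\<integral>u. P (u, v) \<partial>lborel)" for v
  have XY: "X v = Y v" if v: "v \<in> I01" for v
    unfolding X_def Y_def set_lebesgue_integral_def
    by (rule Bochner_Integration.integral_cong) (use v in \<open>simp_all add: Peq partial2_pd indicator_def\<close>)
  have Y0: "Y v = 0" if v: "v \<notin> I01" for v
    unfolding Y_def using v by (simp add: Peq)
  have swap: "(\<lambda>q::real \<times> real. (snd q, fst q)) \<in> borel_measurable borel"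
    by (rule borel_measurable_continuous_onI) (intro continuous_intros)
  have Ps: "(\<lambda>q::real \<times> real. P (snd q, fst q)) \<in> borel_measurable borel"
    using measurable_compose[OF swap P_m] by (simp add: o_def)
  have e: "measurable ((borel :: real measure) \<Otimes>\<^sub>M lborel) (borel :: real measure) =
      measurable (borel :: (real \<times> real) measure) (borel :: real measure)"
    by (rule measurable_cong_sets[OF sets_pair_borel2 refl])
  have Ps2: "(\<lambda>(v, u). P (u, v)) \<in> borel_measurable ((borel :: real measure) \<Otimes>\<^sub>M lborel)"
    unfolding e using Ps by (simp add: case_prod_beta')
  have Y_m: "Y \<in> borel_measurable borel" unfolding Y_def
    by (rule sigma_finite_measure.borel_measurable_lebesgue_integral[OF sigma_finite_lborel Ps2])
  have g_m: "(\<lambda>v. indicator {0..1} v * X v) \<in> borel_measurable borel"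
  proof (rule borel_mod2[OF Y_m, of 0 1])
    fix v :: real assume "v \<noteq> 0" "v \<noteq> 1"
    then show "indicator {0..1} v * X v = Y v"
      by (cases "v \<in> I01") (auto simp: XY Y0 indicator_def)
  qed
  have ae: "AE v in lborel. v \<notin> {0, 1::real}"
    by (rule AE_not_in) (simp add: countable_imp_null_set_lborel)
  have stepB: "(LINT v:{0..1}|lborel. X v) = (\<integral>v. Y v \<partial>lborel)"
    unfolding set_lebesgue_integral_def
  proof (rule integral_cong_AE)
    show "(\<lambda>v. indicator {0..1} v *\<^sub>R X v) \<in> borel_measurable lborel" using g_m by simp
    show "Y \<in> borel_measurable lborel" using Y_m by simp
    show "AE v in lborel. indicator {0..1} v *\<^sub>R X v = Y v"
      using ae
    proof (rule eventually_mono)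
      fix v :: real assume "v \<notin> {0, 1}"
      then show "indicator {0..1} v *\<^sub>R X v = Y v"
        by (cases "v \<in> I01") (auto simp: XY Y0 indicator_def)
    qed
  qed
  have psf: "pair_sigma_finite lborel lborel"
    unfolding pair_sigma_finite_def by (intro conjI sigma_finite_lborel)
  have int: "integrable (lborel \<Otimes>\<^sub>M lborel) (case_prod (\<lambda>u v. P (u, v)))"
  proof -
    have A: "U01 \<times> I01 \<in> sets (lborel \<Otimes>\<^sub>M lborel)" by (intro pair_measureI) simp_all
    have "emeasure (lborel \<Otimes>\<^sub>M lborel) (U01 \<times> I01) = emeasure lborel U01 * emeasure lborel I01"
      by (rule lborel.emeasure_pair_measure_Times) simp_all
    also have "\<dots> = 1" by simp
    finally have fin: "emeasure (lborel \<Otimes>\<^sub>M lborel) (U01 \<times> I01) < \<infinity>" by simp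
    have Pm2: "P \<in> borel_measurable (lborel \<Otimes>\<^sub>M lborel)" unfolding lborel_prod using P_m by simp
    have "integrable (lborel \<Otimes>\<^sub>M lborel) P"
    proof (rule integrableI_bounded_set[OF A Pm2 fin, where B=1])
      show "AE x in lborel \<Otimes>\<^sub>M lborel. x \<in> U01 \<times> I01 \<longrightarrow> norm (P x) \<le> 1"
        by (rule AE_I2) (use Pb in auto)
      show "AE x in lborel \<Otimes>\<^sub>M lborel. x \<notin> U01 \<times> I01 \<longrightarrow> P x = 0"
        by (rule AE_I2) (simp add: Peq)
    qed
    then show ?thesis by (simp add: case_prod_beta')
  qed
  have stepC: "(\<integral>v. Y v \<partial>lborel) = (\<integral>u. (\<integral>v. P (u, v) \<partial>lborel) \<partial>lborel)"
    unfolding Y_def by (rule pair_sigma_finite.Fubini_integral[OF psf int])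
  have stepD: "(\<integral>v. P (u, v) \<partial>lborel) = indicator U01 u * integral\<^sup>L MI (\<lambda>t. \<bar>pd (C u) t\<bar> powr p)" for u
  proof (cases "u \<in> U01")
    case False
    have "P (u, v) = 0" for v using False by (auto simp: Peq indicator_def)
    then show ?thesis using False by simp
  next
    case True
    have "(\<integral>v. P (u, v) \<partial>lborel) = (\<integral>v. indicator I01 v *\<^sub>R \<bar>pd (C u) v\<bar> powr p \<partial>lborel)"
      by (rule Bochner_Integration.integral_cong) (use True in \<open>simp_all add: Peq indicator_def\<close>)
    also have "\<dots> = integral\<^sup>L MI (\<lambda>t. \<bar>pd (C u) t\<bar> powr p)"
      by (simp add: integral_MI set_lebesgue_integral_def)
    finally show ?thesis using True by simp
  qed
  have "norm_d2 C p = (LINT v:{0..1}|lborel. X v) powr (1 / p)"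
    by (simp add: norm_d2_def X_def)
  also have "\<dots> = (\<integral>u. indicator U01 u * integral\<^sup>L MI (\<lambda>t. \<bar>pd (C u) t\<bar> powr p) \<partial>lborel) powr (1 / p)"
    unfolding stepB stepC stepD ..
  finally show ?thesis .
qed

lemma iter_nice: "nice D \<Longrightarrow> nice ((T_op ^^ k) D)"
  by (induction k) (simp_all add: T_nice)

lemma funpow_SS: "(T_op ^^ Suc (Suc n)) D = T_op (T_op ((T_op ^^ n) D))"
  by simp

lemma iter_even_Gf:
  assumes "nice D" "u \<in> U01"
  shows "Gf (pd ((T_op ^^ (2 * k)) D u)) = Gf (pd (D u))"
proof (induction k)
  case 0 then show ?case by simp
next
  case (Suc k)
  have "2 * Suc k = Suc (Suc (2 * k))" by simp
  then have "(T_op ^^ (2 * Suc k)) D = T_op (T_op ((T_op ^^ (2 * k)) D))" by (simp only: funpow_SS)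
  then show ?case using TT_Gf[OF iter_nice[OF assms(1)] assms(2)] Suc by simp
qed

lemma iter_odd:
  assumes "nice D" "u \<in> U01"
  shows "(T_op ^^ (2 * k + 1)) D u = T_op D u"
proof -
  have "(T_op ^^ (2 * k + 1)) D = T_op ((T_op ^^ (2 * k)) D)" by simp
  moreover have "T_op ((T_op ^^ (2 * k)) D) u = T_op D u"
    by (rule T_eq[OF iter_nice[OF assms(1)] assms(1) assms(2) iter_even_Gf[OF assms]])
  ultimately show ?thesis by simp
qed

lemma iter_even:
  assumes "nice D" "u \<in> U01" "1 \<le> k"
  shows "(T_op ^^ (2 * k)) D u = T_op (T_op D) u"
proof -
  obtain j where j: "k = Suc j" using assms(3) by (cases k) auto
  have "2 * k = Suc (2 * j + 1)" using j by simp
  then have e: "(T_op ^^ (2 * k)) D = T_op ((T_op ^^ (2 * j + 1)) D)" by simp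
  have "T_op ((T_op ^^ (2 * j + 1)) D) u = T_op (T_op D) u"
  proof (rule T_eq[OF iter_nice[OF assms(1)] T_nice[OF assms(1)] assms(2)])
    show "Gf (pd ((T_op ^^ (2 * j + 1)) D u)) = Gf (pd (T_op D u))"
      using iter_odd[OF assms(1,2)] by simp
  qed
  then show ?thesis using e by simp
qed

lemma int_cong_countable:
  fixes g1 g2 :: "real \<Rightarrow> real"
  assumes m1: "g1 \<in> borel_measurable MI" and m2: "g2 \<in> borel_measurable MI" and C: "countable C"
    and eq: "\<And>t. t \<in> I01 \<Longrightarrow> t \<notin> C \<Longrightarrow> g1 t = g2 t" and v: "0 \<le> v" "v \<le> 1"
  shows "(LINT t:{0..v}|lborel. g1 t) = (LINT t:{0..v}|lborel. g2 t)"
proof -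
  have sb: "set_borel_measurable lborel {0<..<v} g" if "g \<in> borel_measurable MI" for g :: "real \<Rightarrow> real"
  proof -
    have a: "(\<lambda>x. indicator I01 x * g x) \<in> borel_measurable borel"
      using that by (simp add: meas_MI_iff set_borel_measurable_def)
    have "(\<lambda>x. indicator {0<..<v} x * (indicator I01 x * g x)) \<in> borel_measurable borel"
      by (intro borel_measurable_times a borel_measurable_indicator) simp
    moreover have "(\<lambda>x. indicator {0<..<v} x * (indicator I01 x * g x)) = (\<lambda>x. indicator {0<..<v} x * g x)"
      using v by (auto simp: fun_eq_iff indicator_def)
    ultimately show ?thesis by (simp add: set_borel_measurable_def)
  qed
  have s1: "set_borel_measurable lborel {0<..<v} g1" by (rule sb[OF m1])
  have s2: "set_borel_measurable lborel {0<..<v} g2" by (rule sb[OF m2])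
  have ae: "AE x in lborel. x \<notin> C" by (rule AE_not_in) (simp add: countable_imp_null_set_lborel C)
  have "(LINT t:{0<..<v}|lborel. g1 t) = (LINT t:{0<..<v}|lborel. g2 t)"
    unfolding set_lebesgue_integral_def
  proof (rule integral_cong_AE)
    show "(\<lambda>x. indicator {0<..<v} x *\<^sub>R g1 x) \<in> borel_measurable lborel" using s1 by (simp add: set_borel_measurable_def)
    show "(\<lambda>x. indicator {0<..<v} x *\<^sub>R g2 x) \<in> borel_measurable lborel" using s2 by (simp add: set_borel_measurable_def)
    show "AE x in lborel. indicator {0<..<v} x *\<^sub>R g1 x = indicator {0<..<v} x *\<^sub>R g2 x"
      using ae
    proof (rule eventually_mono)
      fix x assume x: "x \<notin> C"
      show "indicator {0<..<v} x *\<^sub>R g1 x = indicator {0<..<v} x *\<^sub>R g2 x"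
      proof (cases "x \<in> {0<..<v}")
        case True then have "x \<in> I01" using v by auto
        then show ?thesis using eq[OF _ x] by simp
      qed simp
    qed
  qed
  then show ?thesis using set_int_open[OF s1] set_int_open[OF s2] by simp
qed

lemma TT_Dup:
  assumes cop: "is_copula D" and u: "u \<in> U01" and v: "v \<in> U01"
  shows "T_op (T_op D) u v = D_up D u v"
proof -
  have nD: "nice D" by (rule cop_nice[OF cop])
  define h where "h = pd (D u)"
  have gh: "good h" unfolding h_def by (rule nice_good[OF nD u])
  have hm: "h \<in> borel_measurable MI" using gh by (simp add: good_def)
  have gH: "good (pd (T_op D u))" by (rule nice_good[OF T_nice[OF nD] u])
  have gG: "good (Gf h)" by (rule good_Gf[OF gh])
  have Gm: "Gf h \<in> borel_measurable MI" using gG by (simp add: good_def)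
  have "T_op (T_op D) u v = Phi (pd (T_op D u)) v" by (simp add: T_Phi)
  also have "\<dots> = Phi (Gf h) v"
    by (rule Phi_Gf_eq[OF gH gG]) (simp add: T_Gf[OF nD u] h_def)
  also have "\<dots> = (LINT r:{0..v}|lborel. Gf (Gf h) r)"
    by (rule Phi_layer[OF gG]) (use v in auto)
  also have "\<dots> = (LINT r:{0..v}|lborel. decr_rearr h r)"
  proof -
    have dr: "antimono_on I01 (decr_rearr h)" "Gf (decr_rearr h) = Gf h" using DR[OF gh] by auto
    have aR: "antimono_on I01 (Gf (Gf h))"
      unfolding monotone_on_def using Gf_antimono[OF Gm] by auto
    have "Gf (Gf (Gf h)) = Gf (decr_rearr h)" using Gf3[OF gh] dr(2) by simp
    then have c: "countable {t\<in>I01. Gf (Gf h) t \<noteq> decr_rearr h t}"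
      by (rule antimono_eq_count[OF aR dr(1)])
    show ?thesis
      by (rule int_cong_countable[OF antimono_meas[OF aR] antimono_meas[OF dr(1)] c]) (use v in auto)
  qed
  also have "\<dots> = D_up D u v" by (simp add: D_up_def h_def partial2_pd)
  finally show ?thesis .
qed

lemma NI_T:
  assumes cop: "is_copula D" and u: "u \<in> U01"
  shows "integral\<^sup>L MI (\<lambda>t. \<bar>pd (T_op D u) t\<bar> powr 1) = integral\<^sup>L MI (\<lambda>t. \<bar>pd (D u) t\<bar> powr 1)"
proof -
  have nD: "nice D" by (rule cop_nice[OF cop])
  define h where "h = pd (D u)"
  have gh: "good h" unfolding h_def by (rule nice_good[OF nD u])
  have hm: "h \<in> borel_measurable MI" using gh by (simp add: good_def)
  have hb: "\<And>t. t \<in> I01 \<Longrightarrow> 0 \<le> h t \<and> h t \<le> 1" using gh by (simp add: good_def)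
  have gH: "good (pd (T_op D u))" by (rule nice_good[OF T_nice[OF nD] u])
  have gG: "good (Gf h)" by (rule good_Gf[OF gh])
  have Gm: "Gf h \<in> borel_measurable MI" using gG by (simp add: good_def)
  have ab: "(\<lambda>x::real. \<bar>x\<bar> powr 1) \<in> borel_measurable borel" by measurable
  have "integral\<^sup>L MI (\<lambda>t. \<bar>pd (T_op D u) t\<bar> powr 1) = integral\<^sup>L MI (\<lambda>t. \<bar>Gf h t\<bar> powr 1)"
    by (rule integral_Gf_eq[OF good_meas[OF gH] Gm _ ab]) (simp add: T_Gf[OF nD u] h_def)
  also have "\<dots> = integral\<^sup>L MI (Gf h)"
    by (rule Bochner_Integration.integral_cong) (use Gf_range[OF hm] in simp_all)
  also have "\<dots> = (LINT r:I01|lborel. Gf h r)" by (simp add: integral_MI)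
  also have "\<dots> = (LINT r:{0..1}|lborel. Gf h r)"
  proof -
    have "set_borel_measurable lborel I01 (Gf h)" using Gm by (simp add: meas_MI_iff)
    then show ?thesis by (rule set_int_open[symmetric])
  qed
  also have "\<dots> = Phi h 1" by (rule Phi_layer[OF gh, symmetric]) simp_all
  also have "\<dots> = integral\<^sup>L MI (\<lambda>s. min (h s) 1)" by (rule Phi_MI[OF gh])
  also have "\<dots> = integral\<^sup>L MI (\<lambda>t. \<bar>h t\<bar> powr 1)"
    by (rule Bochner_Integration.integral_cong) (use hb in simp_all)
  finally show ?thesis unfolding h_def .
qed

lemma NI_TT:
  assumes cop: "is_copula D" and u: "u \<in> U01"
  shows "integral\<^sup>L MI (\<lambda>t. \<bar>pd ((T_op ^^ 2) D u) t\<bar> powr p) = integral\<^sup>L MI (\<lambda>t. \<bar>pd (D u) t\<bar> powr p)"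
proof -
  have nD: "nice D" by (rule cop_nice[OF cop])
  have e: "(T_op ^^ 2) D = T_op (T_op D)" by (simp add: numeral_2_eq_2)
  have ab: "(\<lambda>x::real. \<bar>x\<bar> powr p) \<in> borel_measurable borel" by measurable
  show ?thesis unfolding e
    by (rule integral_Gf_eq[OF good_meas[OF nice_good[OF T_nice[OF T_nice[OF nD]] u]]
          good_meas[OF nice_good[OF nD u]] TT_Gf[OF nD u] ab])
qed

theorem mainTheorem9:
  fixes D :: "real \<Rightarrow> real \<Rightarrow> real"
  assumes "is_copula D"
  shows "(\<forall>k::nat. k \<ge> 1 \<longrightarrow> (\<forall>u\<in>{0..1}. \<forall>v\<in>{0..1}. (T_op ^^ (2*k)) D u v = D_up D u v))
       \<and> (\<forall>k::nat. k \<ge> 1 \<longrightarrow> (\<forall>u\<in>{0..1}. \<forall>v\<in>{0..1}. (T_op ^^ (2*k+1)) D u v = T_op D u v))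
       \<and> norm_d2 (T_op D) 1 = norm_d2 D 1
       \<and> (\<forall>p::real. p \<ge> 1 \<longrightarrow> norm_d2 ((T_op ^^ 2) D) p = norm_d2 D p)"
proof -
  have nD: "nice D" by (rule cop_nice[OF assms])
  have i: "\<forall>k::nat. k \<ge> 1 \<longrightarrow> (\<forall>u\<in>{0..1}. \<forall>v\<in>{0..1}. (T_op ^^ (2*k)) D u v = D_up D u v)"
    using iter_even[OF nD] TT_Dup[OF assms] by simp
  have ii: "\<forall>k::nat. k \<ge> 1 \<longrightarrow> (\<forall>u\<in>{0..1}. \<forall>v\<in>{0..1}. (T_op ^^ (2*k+1)) D u v = T_op D u v)"
    using iter_odd[OF nD] by simp
  have iii: "norm_d2 (T_op D) 1 = norm_d2 D 1"
  proof -
    have "(\<lambda>u. indicator U01 u * integral\<^sup>L MI (\<lambda>t. \<bar>pd (T_op D u) t\<bar> powr 1)) =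
        (\<lambda>u. indicator U01 u * integral\<^sup>L MI (\<lambda>t. \<bar>pd (D u) t\<bar> powr 1))"
    proof
      fix u show "indicator U01 u * integral\<^sup>L MI (\<lambda>t. \<bar>pd (T_op D u) t\<bar> powr 1) =
          indicator U01 u * integral\<^sup>L MI (\<lambda>t. \<bar>pd (D u) t\<bar> powr 1)"
        using NI_T[OF assms, of u] by (cases "u \<in> U01") simp_all
    qed
    then show ?thesis
      unfolding norm_formula[OF T_nice[OF nD], of 1, simplified] norm_formula[OF nD, of 1, simplified] by simp
  qed
  have iv: "\<forall>p::real. p \<ge> 1 \<longrightarrow> norm_d2 ((T_op ^^ 2) D) p = norm_d2 D p"
  proof (intro allI impI)
    fix p :: real assume p: "1 \<le> p"
    then have p0: "0 < p" by simp
    have n2: "nice ((T_op ^^ 2) D)" by (rule iter_nice[OF nD])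
    have "(\<lambda>u. indicator U01 u * integral\<^sup>L MI (\<lambda>t. \<bar>pd ((T_op ^^ 2) D u) t\<bar> powr p)) =
        (\<lambda>u. indicator U01 u * integral\<^sup>L MI (\<lambda>t. \<bar>pd (D u) t\<bar> powr p))"
    proof
      fix u show "indicator U01 u * integral\<^sup>L MI (\<lambda>t. \<bar>pd ((T_op ^^ 2) D u) t\<bar> powr p) =
          indicator U01 u * integral\<^sup>L MI (\<lambda>t. \<bar>pd (D u) t\<bar> powr p)"
        using NI_TT[OF assms, of u p] by (cases "u \<in> U01") simp_all
    qed
    then show "norm_d2 ((T_op ^^ 2) D) p = norm_d2 D p"
      unfolding norm_formula[OF n2 p0] norm_formula[OF nD p0] by simp
  qed
  show ?thesis using i ii iii iv by blast
qed


end
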